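(* Let $\mathcal Y$ be finite-dimensional. Let $p\in[1,\infty]$ and suppose $c_0(\mathcal Z)\cap B^p(\mathcal Z)\subseteq\underline{\mathcal Z}\subseteq\ell^p(\mathcal Z)$. Let $H:\underline{\mathcal Z}\to\mathcal Y$ be a linear functional. (i) If $p=1$: $H$ has the $1$-weighted FMP if and only if it has a (proper) convolution representation $\underline\kappa$ with $\lim_{t\to-\infty}\|\kappa_t\|_{op}=0$. Furthermore, the following are equivalent: $H$ is $1$-continuous; $H$ has a (proper) convolution representation with $\|\underline\kappa\|_\infty<\infty$; $H$ has the minimal FMP and is minimally continuous. (ii) If $p\in(1,\infty)$ and $q\in(1,\infty)$ is its Hölder conjugate ($1/p+1/q=1$), the following are equivalent: $H$ has the $p$-weighted FMP; $H$ is $p$-continuous; $H$ has a (proper) convolution representation with $\|\underline\kappa\|_q<\infty$; $H$ has the minimal FMP and is minimally continuous. (iii) If $p=\infty$, the following are equivalent: $H$ has the $\infty$-weighted FMP; $H$ has a (proper) convolution representation with $\|\underline\kappa\|_1<\infty$; $H$ has the minimal FMP and is minimally continuous. Furthermore, if in addition $\underline{\mathcal Z}\subseteq c_0(\mathcal Z)$, then $H$ has the $\infty$-weighted FMP if and only if it is $\infty$-continuous.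
   Context: Let $(\mathcal Z,\|\cdot\|)$ and $(\mathcal Y,\|\cdot\|_{\mathcal Y})$ be normed vector spaces over $\mathbb R$ and $\mathcal B=\{z\in\mathcal Z:\|z\|\le1\}$. Let $\mathbb Z_-=\{0,-1,-2,\dots\}$; elements of $\mathcal Z^{\mathbb Z_-}$ are sequences $\underline z=(z_t)_{t\le0}$. For $t\in\mathbb Z_-$, $\delta^t:\mathcal Z\to\mathcal Z^{\mathbb Z_-}$ maps $z$ to the sequence whose entry at time $t$ is $z$ and all other entries are $0$. Standing assumption: $\underline{\mathcal Z}\subseteq\mathcal Z^{\mathbb Z_-}$ is a set such that (a) $\underline{\mathcal Z}$ is convex and $\underline{\mathcal Z}=\{-\underline z:\underline z\in\underline{\mathcal Z}\}$; (b) $\delta^t(\mathcal B)\subseteq\underline{\mathcal Z}$ for all $t\in\mathbb Z_-$; (c) for every $\underline z\in\underline{\mathcal Z}$ and every $J\subseteq\mathbb Z_-$, the sequence $\sum_{t\in J}\delta^t(z_t)$ (equal to $z_t$ at times $t\in J$ and $0$ elsewhere) belongs to $\underline{\mathcal Z}$. A functional $H:\underline{\mathcal Z}\to\mathcal Y$ is linear if it is the restriction of a linear map defined on the linear span of $\underline{\mathcal Z}$. $L(\mathcal Z,\mathcal Y)$ is the space of continuous linear maps $\mathcal Z\to\mathcal Y$ with operator norm $\|\cdot\|_{op}$; for $\underline\kappa\in L(\mathcal Z,\mathcal Y)^{\mathbb Z_-}$ and $q\in[1,\infty)$, $\|\underline\kappa\|_q=(\sum_{t\le0}\|\kappa_t\|_{op}^q)^{1/q}$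 and $\|\underline\kappa\|_\infty=\sup_{t\le0}\|\kappa_t\|_{op}$. $H$ has a formal convolution representation if there is $\underline\kappa\in L(\mathcal Z,\mathcal Y)^{\mathbb Z_-}$ with $H(\underline z)=\lim_{T\to-\infty}\sum_{t=T}^0\kappa_t(z_t)$ for all $\underline z\in\underline{\mathcal Z}$; it has a (proper) convolution representation if in addition $\sum_{t\le0}\|\kappa_t(z_t)\|_{\mathcal Y}<\infty$ for all $\underline z\in\underline{\mathcal Z}$. $H$ is minimally continuous if $H\circ\delta^t:\mathcal B\to\mathcal Y$ is continuous for every $t\in\mathbb Z_-$. $H$ has the minimal fading memory property (minimal FMP) if $H(\sum_{t=T}^0\delta^t(z_t))\to H(\underline z)$ as $T\to-\infty$ for every $\underline z\in\underline{\mathcal Z}$. For $p\in[1,\infty]$, $\ell^p(\mathcal Z)$ is the set of $\underline z$ with $\|\underline z\|_p=(\sum_{t\le0}\|z_t\|^p)^{1/p}<\infty$ (for $p=\infty$: $\|\underline z\|_\infty=\sup_{t\le0}\|z_t\|<\infty$); $B^p(\mathcal Z)=\{\underline z\in\ell^p(\mathcal Z):\|\underline z\|_p\le1\}$; $c_0(\mathcal Z)$ is the set of sequences with $\|z_t\|\to0$ as $t\to-\infty$. A weighting sequence is a monotone $\underline w\in(0,1]^{\mathbb Z_-}$ with $w_t\to0$ as $t\to-\infty$; set $\|\underline z\|_{p,\underline w}=(\sum_{t\le0}w_t\|z_t\|^p)^{1/p}$ for $p<\infty$ and $\|\underline z\|_{\infty,\underline w}=\sup_{t\le0}w_t\|z_t\|$.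 $H$ is $p$-continuous if $\underline{\mathcal Z}\subseteq\ell^p(\mathcal Z)$ and $H$ is continuous for the topology induced by $\|\cdot\|_p$. $H$ has the $p$-weighted FMP if $\underline{\mathcal Z}\subseteq\ell^p(\mathcal Z)$ and there is a weighting sequence $\underline w$ such that $H$ is continuous for the topology induced by $\|\cdot\|_{p,\underline w}$. *)

theory Defs
  imports "HOL-Analysis.Analysis"
begin

text \<open>Sequences indexed by Z_- = {0,-1,-2,...} are represented as functions on nat:
  the entry at time t = -n is stored at index n. Thus t \<rightarrow> -\<infinity> corresponds to n \<rightarrow> \<infinity>.\<close>

definition delta :: "nat \<Rightarrow> 'z::real_normed_vector \<Rightarrow> nat \<Rightarrow> 'z" where
  "delta t z = (\<lambda>k. if k = t then z else 0)"

definition restrict_seq :: "nat set \<Rightarrow> (nat \<Rightarrow> 'z::real_normed_vector) \<Rightarrow> nat \<Rightarrow> 'z" where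
  "restrict_seq J z = (\<lambda>k. if k \<in> J then z k else 0)"

text \<open>Truncation sum_{t=T}^0 delta^t(z_t), i.e. keep the entries at indices n \<le> N.\<close>
definition trunc :: "nat \<Rightarrow> (nat \<Rightarrow> 'z::real_normed_vector) \<Rightarrow> nat \<Rightarrow> 'z" where
  "trunc N z = (\<lambda>k. if k \<le> N then z k else 0)"

definition std_assm :: "(nat \<Rightarrow> 'z::real_normed_vector) set \<Rightarrow> bool" where
  "std_assm Zs \<longleftrightarrow>
     (\<forall>x\<in>Zs. \<forall>y\<in>Zs. \<forall>u::real. 0 \<le> u \<and> u \<le> 1 \<longrightarrow> (\<lambda>n. u *\<^sub>R x n + (1 - u) *\<^sub>R y n) \<in> Zs)
   \<and> (\<forall>x\<in>Zs. (\<lambda>n. - x n) \<in> Zs)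
   \<and> (\<forall>t. \<forall>z. norm z \<le> 1 \<longrightarrow> delta t z \<in> Zs)
   \<and> (\<forall>x\<in>Zs. \<forall>J. restrict_seq J x \<in> Zs)"

text \<open>Restriction of a linear map defined on all sequences (equivalently, on the span of Zs).\<close>
definition linear_functional :: "(nat \<Rightarrow> 'z::real_normed_vector) set \<Rightarrow> ((nat \<Rightarrow> 'z) \<Rightarrow> 'y::real_normed_vector) \<Rightarrow> bool" where
  "linear_functional Zs H \<longleftrightarrow>
     (\<exists>L :: (nat \<Rightarrow> 'z) \<Rightarrow> 'y.
        (\<forall>x y. L (\<lambda>n. x n + y n) = L x + L y)
      \<and> (\<forall>c x. L (\<lambda>n. c *\<^sub>R x n) = c *\<^sub>R L x)
      \<and> (\<forall>z\<in>Zs. H z = L z))"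

definition formal_conv_rep :: "(nat \<Rightarrow> 'z::real_normed_vector) set \<Rightarrow> ((nat \<Rightarrow> 'z) \<Rightarrow> 'y::real_normed_vector) \<Rightarrow> (nat \<Rightarrow> 'z \<Rightarrow> 'y) \<Rightarrow> bool" where
  "formal_conv_rep Zs H \<kappa> \<longleftrightarrow> (\<forall>n. bounded_linear (\<kappa> n)) \<and>
     (\<forall>z\<in>Zs. (\<lambda>T. \<Sum>n\<le>T. \<kappa> n (z n)) \<longlonglongrightarrow> H z)"

definition conv_rep :: "(nat \<Rightarrow> 'z::real_normed_vector) set \<Rightarrow> ((nat \<Rightarrow> 'z) \<Rightarrow> 'y::real_normed_vector) \<Rightarrow> (nat \<Rightarrow> 'z \<Rightarrow> 'y) \<Rightarrow> bool" where
  "conv_rep Zs H \<kappa> \<longleftrightarrow> formal_conv_rep Zs H \<kappa> \<and>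
     (\<forall>z\<in>Zs. summable (\<lambda>n. norm (\<kappa> n (z n))))"

definition minimally_continuous :: "(nat \<Rightarrow> 'z::real_normed_vector) set \<Rightarrow> ((nat \<Rightarrow> 'z) \<Rightarrow> 'y::real_normed_vector) \<Rightarrow> bool" where
  "minimally_continuous Zs H \<longleftrightarrow> (\<forall>t. continuous_on (cball 0 1) (\<lambda>z. H (delta t z)))"

definition minimal_FMP :: "(nat \<Rightarrow> 'z::real_normed_vector) set \<Rightarrow> ((nat \<Rightarrow> 'z) \<Rightarrow> 'y::real_normed_vector) \<Rightarrow> bool" where
  "minimal_FMP Zs H \<longleftrightarrow> (\<forall>z\<in>Zs. (\<lambda>N. H (trunc N z)) \<longlonglongrightarrow> H z)"

definition lp_w_mem :: "ereal \<Rightarrow> (nat \<Rightarrow> real) \<Rightarrow> (nat \<Rightarrow> 'z::real_normed_vector) \<Rightarrow> bool" where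
  "lp_w_mem p w z = (if p = \<infinity> then bounded (range (\<lambda>n. w n * norm (z n)))
                     else summable (\<lambda>n. w n * norm (z n) powr real_of_ereal p))"

definition lp_w_norm :: "ereal \<Rightarrow> (nat \<Rightarrow> real) \<Rightarrow> (nat \<Rightarrow> 'z::real_normed_vector) \<Rightarrow> real" where
  "lp_w_norm p w z = (if p = \<infinity> then (SUP n. w n * norm (z n))
                      else (\<Sum>n. w n * norm (z n) powr real_of_ereal p) powr (1 / real_of_ereal p))"

definition lp_space :: "ereal \<Rightarrow> (nat \<Rightarrow> 'z::real_normed_vector) set" where
  "lp_space p = {z. lp_w_mem p (\<lambda>_. 1) z}"

definition lp_norm :: "ereal \<Rightarrow> (nat \<Rightarrow> 'z::real_normed_vector) \<Rightarrow> real" where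
  "lp_norm p z = lp_w_norm p (\<lambda>_. 1) z"

definition lp_ball :: "ereal \<Rightarrow> (nat \<Rightarrow> 'z::real_normed_vector) set" where
  "lp_ball p = {z \<in> lp_space p. lp_norm p z \<le> 1}"

definition c0_seq :: "(nat \<Rightarrow> 'z::real_normed_vector) set" where
  "c0_seq = {z. (\<lambda>n. norm (z n)) \<longlonglongrightarrow> 0}"

definition weighting_seq :: "(nat \<Rightarrow> real) \<Rightarrow> bool" where
  "weighting_seq w \<longleftrightarrow> (\<forall>n. 0 < w n \<and> w n \<le> 1) \<and> decseq w \<and> w \<longlonglongrightarrow> 0"

definition cont_wrt :: "((nat \<Rightarrow> 'z::real_normed_vector) \<Rightarrow> real) \<Rightarrow> (nat \<Rightarrow> 'z) set \<Rightarrow> ((nat \<Rightarrow> 'z) \<Rightarrow> 'y::real_normed_vector) \<Rightarrow> bool" where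
  "cont_wrt N Zs H \<longleftrightarrow> (\<forall>z\<in>Zs. \<forall>e>0. \<exists>d>0. \<forall>z'\<in>Zs. N (\<lambda>n. z' n - z n) < d \<longrightarrow> dist (H z') (H z) < e)"

definition p_continuous :: "ereal \<Rightarrow> (nat \<Rightarrow> 'z::real_normed_vector) set \<Rightarrow> ((nat \<Rightarrow> 'z) \<Rightarrow> 'y::real_normed_vector) \<Rightarrow> bool" where
  "p_continuous p Zs H \<longleftrightarrow> Zs \<subseteq> lp_space p \<and> cont_wrt (lp_norm p) Zs H"

definition p_weighted_FMP :: "ereal \<Rightarrow> (nat \<Rightarrow> 'z::real_normed_vector) set \<Rightarrow> ((nat \<Rightarrow> 'z) \<Rightarrow> 'y::real_normed_vector) \<Rightarrow> bool" where
  "p_weighted_FMP p Zs H \<longleftrightarrow> Zs \<subseteq> lp_space p \<and>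
     (\<exists>w. weighting_seq w \<and> cont_wrt (lp_w_norm p w) Zs H)"

end

theory Submission
  imports Defs
begin


lemma fd_coeff_bound:
  fixes S :: "'y::real_normed_vector set"
  assumes "finite S" "independent S"
  shows "\<exists>C\<ge>0. \<forall>c. (\<Sum>b\<in>S. \<bar>c b\<bar>) \<le> C * norm (\<Sum>b\<in>S. c b *\<^sub>R b)"
  using assms
proof (induction S rule: finite_induct)
  case empty
  then show ?case by auto
next
  case (insert b T)
  have indT: "independent T" and bT: "b \<notin> span T"
    using insert.prems insert.hyps by (auto simp: independent_insert)
  obtain CT where CT0: "CT \<ge> 0" and CT: "\<And>c. (\<Sum>e\<in>T. \<bar>c e\<bar>) \<le> CT * norm (\<Sum>e\<in>T. c e *\<^sub>R e)"
    using insert.IH indT by blast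
  have "\<exists>d>0. \<forall>c. d \<le> norm (b - (\<Sum>e\<in>T. c e *\<^sub>R e))"
  proof (rule ccontr)
    assume neg: "\<not> ?thesis"
    have "\<forall>j::nat. \<exists>c. norm (b - (\<Sum>e\<in>T. c e *\<^sub>R e)) < 1 / (real j + 1)"
    proof
      fix j :: nat
      have "1 / (real j + 1) > 0" by simp
      then show "\<exists>c. norm (b - (\<Sum>e\<in>T. c e *\<^sub>R e)) < 1 / (real j + 1)"
        using neg by (meson not_le)
    qed
    then obtain cs where cs: "\<And>j. norm (b - (\<Sum>e\<in>T. cs j e *\<^sub>R e)) < 1 / (real j + 1)"
      by metis
    define w where "w j = (\<Sum>e\<in>T. cs j e *\<^sub>R e)" for j
    have wlim: "w \<longlonglongrightarrow> b"
    proof -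
      have "(\<lambda>j. w j - b) \<longlonglongrightarrow> 0"
      proof (rule Lim_null_comparison)
        show "(\<lambda>j. 1 / (real j + 1)) \<longlonglongrightarrow> 0"
          using LIMSEQ_inverse_real_of_nat by (simp add: inverse_eq_divide add.commute)
        show "\<forall>\<^sub>F j in sequentially. norm (w j - b) \<le> 1 / (real j + 1)"
          using cs by (intro always_eventually) (simp add: w_def norm_minus_commute less_imp_le)
      qed
      then show ?thesis by (rule LIM_zero_cancel)
    qed
    have diff: "\<And>j k e. e \<in> T \<Longrightarrow> \<bar>cs j e - cs k e\<bar> \<le> CT * norm (w j - w k)"
    proof -
      fix j k e assume e: "e \<in> T"
      have "\<bar>cs j e - cs k e\<bar> \<le> (\<Sum>e\<in>T. \<bar>cs j e - cs k e\<bar>)"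
        using e insert.hyps(1) by (intro member_le_sum) auto
      also have "\<dots> \<le> CT * norm (\<Sum>e\<in>T. (cs j e - cs k e) *\<^sub>R e)" by (rule CT)
      also have "(\<Sum>e\<in>T. (cs j e - cs k e) *\<^sub>R e) = w j - w k"
        by (simp add: w_def scaleR_diff_left sum_subtractf)
      finally show "\<bar>cs j e - cs k e\<bar> \<le> CT * norm (w j - w k)" .
    qed
    have "\<forall>e\<in>T. convergent (\<lambda>j. cs j e)"
    proof
      fix e assume e: "e \<in> T"
      have "Cauchy (\<lambda>j. cs j e)"
      proof (rule metric_CauchyI)
        fix eps :: real assume eps: "eps > 0"
        have "Cauchy w" using wlim by (rule LIMSEQ_imp_Cauchy)
        then obtain M where M: "\<And>m n. m \<ge> M \<Longrightarrow> n \<ge> M \<Longrightarrow> dist (w m) (w n) < eps / (CT + 1)"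
          using eps CT0 by (metis Cauchy_def divide_pos_pos add_nonneg_pos zero_less_one)
        show "\<exists>M. \<forall>m\<ge>M. \<forall>n\<ge>M. dist (cs m e) (cs n e) < eps"
        proof (intro exI allI impI)
          fix m n assume "m \<ge> M" "n \<ge> M"
          then have "norm (w m - w n) < eps / (CT + 1)" using M by (simp add: dist_norm)
          then have "CT * norm (w m - w n) \<le> CT * (eps / (CT+1))"
            using CT0 by (intro mult_left_mono) auto
          also have "\<dots> < eps" using CT0 eps by (simp add: field_simps)
          finally show "dist (cs m e) (cs n e) < eps"
            using diff[OF e, of m n] by (simp add: dist_real_def)
        qed
      qed
      then show "convergent (\<lambda>j. cs j e)" by (simp add: Cauchy_convergent_iff)
    qed
    then obtain l where l: "\<And>e. e \<in> T \<Longrightarrow> (\<lambda>j. cs j e) \<longlonglongrightarrow> l e"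
      unfolding convergent_def by metis
    have "w \<longlonglongrightarrow> (\<Sum>e\<in>T. l e *\<^sub>R e)"
      unfolding w_def by (intro tendsto_sum tendsto_scaleR l tendsto_const)
    with wlim have "b = (\<Sum>e\<in>T. l e *\<^sub>R e)" by (rule LIMSEQ_unique)
    then have "b \<in> span T"
      by (simp add: span_sum span_scale span_base)
    with bT show False by simp
  qed
  then obtain d where d0: "d > 0" and d: "\<And>c. d \<le> norm (b - (\<Sum>e\<in>T. c e *\<^sub>R e))" by blast
  define C where "C = CT * (1 + norm b / d) + 1 / d"
  have C0: "C \<ge> 0" using CT0 d0 by (simp add: C_def)
  show ?case
  proof (intro exI[of _ C] conjI allI C0)
    fix c :: "'y \<Rightarrow> real"
    define y where "y = (\<Sum>e\<in>insert b T. c e *\<^sub>R e)"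
    define w where "w = (\<Sum>e\<in>T. c e *\<^sub>R e)"
    have y: "y = c b *\<^sub>R b + w" using insert.hyps by (simp add: y_def w_def)
    have cb: "\<bar>c b\<bar> \<le> norm y / d"
    proof (cases "c b = 0")
      case True then show ?thesis using d0 by simp
    next
      case False
      have "d \<le> norm (b - (\<Sum>e\<in>T. (- c e / c b) *\<^sub>R e))" by (rule d)
      also have "b - (\<Sum>e\<in>T. (- c e / c b) *\<^sub>R e) = (1 / c b) *\<^sub>R y"
        using False by (simp add: y w_def scaleR_sum_right sum_negf algebra_simps)
      also have "norm \<dots> = norm y / \<bar>c b\<bar>" by simp
      finally show ?thesis using False d0 by (simp add: field_simps)
    qed
    have "norm w \<le> norm y + \<bar>c b\<bar> * norm b"
      using y norm_triangle_ineq4[of y "c b *\<^sub>R b"] by (simp add: algebra_simps)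
    also have "\<dots> \<le> norm y + norm y / d * norm b"
      using cb by (intro add_left_mono mult_right_mono) auto
    finally have nw: "norm w \<le> norm y * (1 + norm b / d)" by (simp add: algebra_simps)
    have "(\<Sum>e\<in>insert b T. \<bar>c e\<bar>) = \<bar>c b\<bar> + (\<Sum>e\<in>T. \<bar>c e\<bar>)"
      using insert.hyps by simp
    also have "\<dots> \<le> norm y / d + CT * norm w" using cb CT[of c] by (simp add: w_def)
    also have "\<dots> \<le> norm y / d + CT * (norm y * (1 + norm b / d))"
      using nw CT0 by (intro add_left_mono mult_left_mono) auto
    also have "\<dots> = C * norm y" by (simp add: C_def algebra_simps)
    finally show "(\<Sum>e\<in>insert b T. \<bar>c e\<bar>) \<le> C * norm (\<Sum>e\<in>insert b T. c e *\<^sub>R e)"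
      by (simp add: y_def)
  qed
qed



lemma fd_basis:
  assumes "\<exists>B::'y::real_normed_vector set. finite B \<and> span B = UNIV"
  shows "\<exists>S::'y set. finite S \<and> (\<exists>C\<ge>0. \<forall>c. (\<Sum>b\<in>S. \<bar>c b\<bar>) \<le> C * norm (\<Sum>b\<in>S. c b *\<^sub>R b))
          \<and> (\<forall>y. \<exists>c. y = (\<Sum>b\<in>S. c b *\<^sub>R b))"
proof -
  obtain B :: "'y set" where B: "finite B" "span B = UNIV" using assms by blast
  obtain S where S: "S \<subseteq> B" "independent S" "B \<subseteq> span S"
    by (rule maximal_independent_subset[of B])
  have fS: "finite S" using S(1) B(1) finite_subset by blast
  have "span B \<subseteq> span S" by (rule span_minimal[OF S(3) subspace_span])
  then have spS: "span S = UNIV" using B(2) by blast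
  have "\<forall>y. \<exists>c. y = (\<Sum>b\<in>S. c b *\<^sub>R b)"
  proof
    fix y :: 'y
    have "y \<in> range (\<lambda>u. \<Sum>v\<in>S. u v *\<^sub>R v)" using span_finite[OF fS] spS by simp
    then show "\<exists>c. y = (\<Sum>b\<in>S. c b *\<^sub>R b)" by blast
  qed
  then show ?thesis using fS fd_coeff_bound[OF fS S(2)] by blast
qed

lemma fd_abs_summable:
  fixes a :: "nat \<Rightarrow> 'y::real_normed_vector"
  assumes fin: "\<exists>B::'y set. finite B \<and> span B = UNIV"
    and bnd: "\<And>J. \<exists>M. \<forall>N. norm (\<Sum>n\<le>N. if n \<in> J then a n else 0) \<le> M"
  shows "summable (\<lambda>n. norm (a n))"
proof -
  obtain S :: "'y set" and C where fS: "finite S" and C0: "C \<ge> 0"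
    and C: "\<And>c. (\<Sum>b\<in>S. \<bar>c b\<bar>) \<le> C * norm (\<Sum>b\<in>S. c b *\<^sub>R b)"
    and sp: "\<And>y. \<exists>c. y = (\<Sum>b\<in>S. c b *\<^sub>R b)"
    using fd_basis[OF fin] by blast
  have "\<forall>n. \<exists>c. a n = (\<Sum>b\<in>S. c b *\<^sub>R b)" using sp by blast
  then obtain cf where cf: "\<And>n. a n = (\<Sum>b\<in>S. cf n b *\<^sub>R b)"
    by (auto dest!: choice)
  have "\<forall>J. \<exists>M. \<forall>N. norm (\<Sum>n\<le>N. if n \<in> J then a n else 0) \<le> M" using bnd by blast
  then obtain M where M: "\<And>J N. norm (\<Sum>n\<le>N. if n \<in> J then a n else 0) \<le> M J"
    by (auto dest!: choice)
  define K where "K = (\<Sum>b\<in>S. norm b)"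
  have K0: "K \<ge> 0" by (simp add: K_def sum_nonneg)
  have restr: "\<bar>\<Sum>n\<le>N. if n \<in> J then cf n b else 0\<bar> \<le> C * M J" if b: "b \<in> S" for J N b
  proof -
    define c where "c b' = (\<Sum>n\<le>N. if n \<in> J then cf n b' else 0)" for b'
    have eq: "(\<Sum>n\<le>N. if n \<in> J then a n else 0) = (\<Sum>b'\<in>S. c b' *\<^sub>R b')"
    proof -
      have "(\<Sum>n\<le>N. if n \<in> J then a n else 0) = (\<Sum>n\<le>N. \<Sum>b'\<in>S. (if n \<in> J then cf n b' else 0) *\<^sub>R b')"
        by (intro sum.cong refl) (simp add: cf)
      also have "\<dots> = (\<Sum>b'\<in>S. \<Sum>n\<le>N. (if n \<in> J then cf n b' else 0) *\<^sub>R b')"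
        by (rule sum.swap)
      also have "\<dots> = (\<Sum>b'\<in>S. c b' *\<^sub>R b')"
        by (simp add: c_def scaleR_sum_left)
      finally show ?thesis .
    qed
    have "\<bar>c b\<bar> \<le> (\<Sum>b'\<in>S. \<bar>c b'\<bar>)" using b fS by (intro member_le_sum) auto
    also have "\<dots> \<le> C * norm (\<Sum>b'\<in>S. c b' *\<^sub>R b')" by (rule C)
    also have "\<dots> \<le> C * M J" using M[of J N] eq C0 by (simp add: mult_left_mono)
    finally show ?thesis by (simp add: c_def)
  qed
  have "\<And>N. (\<Sum>n\<le>N. norm (a n)) \<le> K * (\<Sum>b\<in>S. C * M {n. cf n b \<ge> 0} + C * M {n. cf n b < 0})"
  proof -
    fix N
    have "(\<Sum>n\<le>N. norm (a n)) \<le> (\<Sum>n\<le>N. \<Sum>b\<in>S. \<bar>cf n b\<bar> * norm b)"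
    proof (rule sum_mono)
      fix n
      have "norm (a n) \<le> (\<Sum>b\<in>S. norm (cf n b *\<^sub>R b))" unfolding cf by (rule norm_sum)
      then show "norm (a n) \<le> (\<Sum>b\<in>S. \<bar>cf n b\<bar> * norm b)" by simp
    qed
    also have "\<dots> \<le> (\<Sum>n\<le>N. \<Sum>b\<in>S. \<bar>cf n b\<bar> * K)"
    proof (intro sum_mono mult_left_mono)
      fix n b assume "b \<in> S"
      then show "norm b \<le> K" unfolding K_def using fS by (intro member_le_sum) auto
    qed auto
    also have "\<dots> = K * (\<Sum>b\<in>S. \<Sum>n\<le>N. \<bar>cf n b\<bar>)"
      by (subst sum.swap) (simp add: sum_distrib_left sum_distrib_right mult.commute)
    also have "\<dots> \<le> K * (\<Sum>b\<in>S. C * M {n. cf n b \<ge> 0} + C * M {n. cf n b < 0})"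
    proof (intro mult_left_mono[OF _ K0] sum_mono)
      fix b assume b: "b \<in> S"
      have "(\<Sum>n\<le>N. \<bar>cf n b\<bar>) = (\<Sum>n\<le>N. if n \<in> {n. cf n b \<ge> 0} then cf n b else 0)
            - (\<Sum>n\<le>N. if n \<in> {n. cf n b < 0} then cf n b else 0)"
        by (simp add: sum_subtractf[symmetric]) (intro sum.cong, auto)
      also have "\<dots> \<le> \<bar>\<Sum>n\<le>N. if n \<in> {n. cf n b \<ge> 0} then cf n b else 0\<bar>
            + \<bar>\<Sum>n\<le>N. if n \<in> {n. cf n b < 0} then cf n b else 0\<bar>" by linarith
      also have "\<dots> \<le> C * M {n. cf n b \<ge> 0} + C * M {n. cf n b < 0}"
        using restr[OF b] by (intro add_mono) 
      finally show "(\<Sum>n\<le>N. \<bar>cf n b\<bar>) \<le> C * M {n. cf n b \<ge> 0} + C * M {n. cf n b < 0}" .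
    qed
    finally show "(\<Sum>n\<le>N. norm (a n)) \<le> K * (\<Sum>b\<in>S. C * M {n. cf n b \<ge> 0} + C * M {n. cf n b < 0})" .
  qed
  then show ?thesis by (intro bounded_imp_summable) auto
qed



definition lin_L :: "((nat \<Rightarrow> 'z::real_normed_vector) \<Rightarrow> 'y::real_normed_vector) \<Rightarrow> bool" where
  "lin_L L \<longleftrightarrow> (\<forall>x y. L (\<lambda>n. x n + y n) = L x + L y) \<and> (\<forall>c x. L (\<lambda>n. c *\<^sub>R x n) = c *\<^sub>R L x)"

lemma lin_obtain:
  assumes "linear_functional Zs H"
  obtains L where "lin_L L" "\<And>z. z \<in> Zs \<Longrightarrow> H z = L z"
  using assms unfolding linear_functional_def lin_L_def by blast

lemma lin_L_add: "lin_L L \<Longrightarrow> L (\<lambda>n. x n + y n) = L x + L y"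
  unfolding lin_L_def by blast

lemma lin_L_scale: "lin_L L \<Longrightarrow> L (\<lambda>n. c *\<^sub>R x n) = c *\<^sub>R L x"
  unfolding lin_L_def by blast

lemma lin_L_zero: "lin_L L \<Longrightarrow> L (\<lambda>n. 0) = 0"
  using lin_L_scale[of L 0 "\<lambda>n. 0"] by simp

lemma lin_L_sum:
  assumes "lin_L L" "finite I"
  shows "L (\<lambda>k. \<Sum>i\<in>I. f i k) = (\<Sum>i\<in>I. L (f i))"
  using assms(2)
proof (induction I rule: finite_induct)
  case empty then show ?case using lin_L_zero[OF assms(1)] by simp
next
  case (insert i I)
  have "L (\<lambda>k. \<Sum>i\<in>insert i I. f i k) = L (\<lambda>k. f i k + (\<Sum>i\<in>I. f i k))"
    using insert.hyps by simp
  also have "\<dots> = L (f i) + L (\<lambda>k. \<Sum>i\<in>I. f i k)"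
    using lin_L_add[OF assms(1), of "f i" "\<lambda>k. \<Sum>i\<in>I. f i k"] by simp
  finally show ?case using insert by simp
qed

lemma trunc_as_sum: "trunc N z = (\<lambda>k. \<Sum>n\<le>N. delta n (z n) k)"
proof
  fix k
  have "(\<Sum>n\<le>N. delta n (z n) k) = (\<Sum>n\<in>{..N}. if k = n then z k else 0)"
    by (intro sum.cong refl) (simp add: delta_def)
  also have "\<dots> = trunc N z k" by (simp add: trunc_def)
  finally show "trunc N z k = (\<Sum>n\<le>N. delta n (z n) k)" by simp
qed

lemma lin_L_trunc:
  assumes "lin_L L"
  shows "L (trunc N z) = (\<Sum>n\<le>N. L (delta n (z n)))"
  unfolding trunc_as_sum by (rule lin_L_sum[OF assms]) simp

lemma kap_linear:
  assumes "lin_L L"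
  shows "linear (\<lambda>u. L (delta n u))"
proof (rule linearI)
  fix x y :: 'a
  have "delta n (x + y) = (\<lambda>k. delta n x k + delta n y k)" by (auto simp: delta_def)
  then show "L (delta n (x + y)) = L (delta n x) + L (delta n y)"
    using lin_L_add[OF assms] by simp
next
  fix c :: real and x :: 'a
  have "delta n (c *\<^sub>R x) = (\<lambda>k. c *\<^sub>R delta n x k)" by (auto simp: delta_def)
  then show "L (delta n (c *\<^sub>R x)) = c *\<^sub>R L (delta n x)"
    using lin_L_scale[OF assms] by simp
qed

lemma kap_bounded_linear:
  fixes L :: "(nat \<Rightarrow> 'z::real_normed_vector) \<Rightarrow> 'y::real_normed_vector"
  assumes L: "lin_L L" and c: "continuous_on (cball 0 1) (\<lambda>u. L (delta n u))"
  shows "bounded_linear (\<lambda>u. L (delta n u))"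
proof -
  interpret lf: linear "(\<lambda>u. L (delta n u))" by (rule kap_linear[OF L])
  have z: "L (delta n 0) = 0" using lf.zero by simp
  obtain d where d0: "d > 0" and d: "\<And>u. u \<in> cball 0 1 \<Longrightarrow> dist u 0 < d \<Longrightarrow> dist (L (delta n u)) (L (delta n 0)) < 1"
  proof -
    have "(0::'z) \<in> cball 0 1" by simp
    then show ?thesis using c that unfolding continuous_on_iff by (meson zero_less_one)
  qed
  define e where "e = min d 1 / 2"
  have e0: "e > 0" and ed: "e < d" and e1: "e \<le> 1" using d0 by (auto simp: e_def)
  show ?thesis
  proof (rule bounded_linear_intro[where K = "1 / e"])
    show "\<And>x y. L (delta n (x + y)) = L (delta n x) + L (delta n y)" by (rule lf.add)
    show "\<And>r x. L (delta n (r *\<^sub>R x)) = r *\<^sub>R L (delta n x)" by (rule lf.scale)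
    fix x :: 'z
    show "norm (L (delta n x)) \<le> norm x * (1 / e)"
    proof (cases "x = 0")
      case True then show ?thesis using z by simp
    next
      case False
      define u where "u = (e / norm x) *\<^sub>R x"
      have nu: "norm u = e" using False e0 by (simp add: u_def)
      have "norm (L (delta n u)) < 1"
        using d[of u] nu e1 ed z by (simp add: dist_norm)
      moreover have "L (delta n u) = (e / norm x) *\<^sub>R L (delta n x)"
        by (simp add: u_def lf.scale)
      ultimately have "(e / norm x) * norm (L (delta n x)) < 1"
        using e0 by simp
      then show ?thesis using False e0 by (simp add: field_simps)
    qed
  qed
qed

lemma std_zero: "std_assm Zs \<Longrightarrow> (\<lambda>n. 0) \<in> Zs"
  unfolding std_assm_def using delta_def[of 0 "0::'a"]
  by (metis norm_zero zero_less_one less_imp_le)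

lemma std_delta: "std_assm Zs \<Longrightarrow> norm u \<le> 1 \<Longrightarrow> delta t u \<in> Zs"
  unfolding std_assm_def by blast

lemma std_restrict: "std_assm Zs \<Longrightarrow> z \<in> Zs \<Longrightarrow> restrict_seq J z \<in> Zs"
  unfolding std_assm_def by blast

lemma std_trunc: "std_assm Zs \<Longrightarrow> z \<in> Zs \<Longrightarrow> trunc N z \<in> Zs"
proof -
  assume "std_assm Zs" "z \<in> Zs"
  moreover have "trunc N z = restrict_seq {..N} z" by (auto simp: trunc_def restrict_seq_def)
  ultimately show ?thesis using std_restrict by metis
qed

lemma sum_bl_if:
  assumes "\<And>n. bounded_linear (\<kappa> n)"
  shows "(\<Sum>n\<le>T. \<kappa> n (if P n then x n else 0)) = (\<Sum>n\<le>T. if P n then \<kappa> n (x n) else 0)"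
  by (intro sum.cong refl) (simp add: linear_simps(3)[OF assms])



lemma conv_rep_bl: "conv_rep Zs H \<kappa> \<Longrightarrow> bounded_linear (\<kappa> n)"
  unfolding conv_rep_def formal_conv_rep_def by blast

lemma conv_rep_lim: "conv_rep Zs H \<kappa> \<Longrightarrow> z \<in> Zs \<Longrightarrow> (\<lambda>T. \<Sum>n\<le>T. \<kappa> n (z n)) \<longlonglongrightarrow> H z"
  unfolding conv_rep_def formal_conv_rep_def by blast

lemma conv_rep_abs: "conv_rep Zs H \<kappa> \<Longrightarrow> z \<in> Zs \<Longrightarrow> summable (\<lambda>n. norm (\<kappa> n (z n)))"
  unfolding conv_rep_def by blast

lemma conv_rep_trunc:
  assumes std: "std_assm Zs" and cr: "conv_rep Zs H \<kappa>" and z: "z \<in> Zs"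
  shows "H (trunc N z) = (\<Sum>n\<le>N. \<kappa> n (z n))"
proof -
  have tz: "trunc N z \<in> Zs" using std_trunc[OF std z] .
  have "(\<lambda>T. \<Sum>n\<le>T. \<kappa> n (trunc N z n)) \<longlonglongrightarrow> H (trunc N z)" by (rule conv_rep_lim[OF cr tz])
  moreover have "(\<lambda>T. \<Sum>n\<le>T. \<kappa> n (trunc N z n)) \<longlonglongrightarrow> (\<Sum>n\<le>N. \<kappa> n (z n))"
  proof (rule tendsto_eventually, rule eventually_sequentiallyI[of N])
    fix T assume T: "N \<le> T"
    have "(\<Sum>n\<le>T. \<kappa> n (trunc N z n)) = (\<Sum>n\<le>T. if n \<le> N then \<kappa> n (z n) else 0)"
      unfolding trunc_def by (rule sum_bl_if[OF conv_rep_bl[OF cr]])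
    also have "\<dots> = (\<Sum>n\<in>{..T} \<inter> {n. n \<le> N}. \<kappa> n (z n))"
      by (simp add: sum.inter_restrict)
    also have "{..T} \<inter> {n. n \<le> N} = {..N}" using T by auto
    finally show "(\<Sum>n\<le>T. \<kappa> n (trunc N z n)) = (\<Sum>n\<le>N. \<kappa> n (z n))" .
  qed
  ultimately show ?thesis by (rule LIMSEQ_unique)
qed

lemma conv_rep_delta:
  assumes std: "std_assm Zs" and cr: "conv_rep Zs H \<kappa>" and u: "norm u \<le> 1"
  shows "H (delta t u) = \<kappa> t u"
proof -
  have dz: "delta t u \<in> Zs" using std_delta[OF std u] .
  have "(\<lambda>T. \<Sum>n\<le>T. \<kappa> n (delta t u n)) \<longlonglongrightarrow> H (delta t u)" by (rule conv_rep_lim[OF cr dz])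
  moreover have "(\<lambda>T. \<Sum>n\<le>T. \<kappa> n (delta t u n)) \<longlonglongrightarrow> \<kappa> t u"
  proof (rule tendsto_eventually, rule eventually_sequentiallyI[of t])
    fix T assume T: "t \<le> T"
    have "(\<Sum>n\<le>T. \<kappa> n (delta t u n)) = (\<Sum>n\<le>T. if n = t then \<kappa> n u else 0)"
      unfolding delta_def by (rule sum_bl_if[OF conv_rep_bl[OF cr]])
    also have "\<dots> = \<kappa> t u" using T by (simp add: sum.delta)
    finally show "(\<Sum>n\<le>T. \<kappa> n (delta t u n)) = \<kappa> t u" .
  qed
  ultimately show ?thesis by (rule LIMSEQ_unique)
qed

lemma conv_rep_imp_MF:
  assumes std: "std_assm Zs" and cr: "conv_rep Zs H \<kappa>"
  shows "minimal_FMP Zs H \<and> minimally_continuous Zs H"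
proof
  show "minimal_FMP Zs H"
    unfolding minimal_FMP_def using conv_rep_trunc[OF std cr] conv_rep_lim[OF cr] by simp
  show "minimally_continuous Zs H"
    unfolding minimally_continuous_def
  proof
    fix t
    have "continuous_on (cball 0 1) (\<kappa> t)"
      by (rule linear_continuous_on[OF conv_rep_bl[OF cr]])
    moreover have "\<And>u. u \<in> cball 0 1 \<Longrightarrow> H (delta t u) = \<kappa> t u"
      using conv_rep_delta[OF std cr] by simp
    ultimately show "continuous_on (cball (0::'a) 1) (\<lambda>u. H (delta t u))"
      using continuous_on_cong by (metis (mono_tags, lifting))
  qed
qed

lemma MF_imp_conv_rep:
  fixes Zs :: "(nat \<Rightarrow> 'z::real_normed_vector) set" and H :: "(nat \<Rightarrow> 'z) \<Rightarrow> 'y::real_normed_vector"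
  assumes std: "std_assm Zs" and fin: "\<exists>B::'y set. finite B \<and> span B = UNIV"
    and L: "lin_L L" and HL: "\<And>z. z \<in> Zs \<Longrightarrow> H z = L z"
    and mf: "minimal_FMP Zs H" and mc: "minimally_continuous Zs H"
  shows "conv_rep Zs H (\<lambda>n u. L (delta n u))"
proof -
  have bl: "bounded_linear (\<lambda>u. L (delta n u))" for n
  proof (rule kap_bounded_linear[OF L])
    have "continuous_on (cball 0 1) (\<lambda>u. H (delta n u))" using mc by (simp add: minimally_continuous_def)
    moreover have "\<And>u. u \<in> cball 0 1 \<Longrightarrow> H (delta n u) = L (delta n u)"
      using HL std_delta[OF std] by simp
    ultimately show "continuous_on (cball 0 1) (\<lambda>u. L (delta n u))"
      using continuous_on_cong by (metis (mono_tags, lifting))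
  qed
  have lim: "(\<lambda>T. \<Sum>n\<le>T. L (delta n (z n))) \<longlonglongrightarrow> H z" if z: "z \<in> Zs" for z
  proof -
    have "(\<lambda>T. H (trunc T z)) \<longlonglongrightarrow> H z" using mf z by (simp add: minimal_FMP_def)
    moreover have "H (trunc T z) = (\<Sum>n\<le>T. L (delta n (z n)))" for T
      using HL[OF std_trunc[OF std z]] lin_L_trunc[OF L] by simp
    ultimately show ?thesis by simp
  qed
  have abs: "summable (\<lambda>n. norm (L (delta n (z n))))" if z: "z \<in> Zs" for z
  proof (rule fd_abs_summable[OF fin])
    fix J
    have rz: "restrict_seq J z \<in> Zs" by (rule std_restrict[OF std z])
    have "convergent (\<lambda>T. \<Sum>n\<le>T. L (delta n (restrict_seq J z n)))"
      using lim[OF rz] by (auto simp: convergent_def)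
    then have "Bseq (\<lambda>T. \<Sum>n\<le>T. L (delta n (restrict_seq J z n)))" by (rule convergent_imp_Bseq)
    then obtain K where K: "\<And>T. norm (\<Sum>n\<le>T. L (delta n (restrict_seq J z n))) \<le> K"
      unfolding Bseq_def by blast
    have "(\<Sum>n\<le>T. L (delta n (restrict_seq J z n))) = (\<Sum>n\<le>T. if n \<in> J then L (delta n (z n)) else 0)" for T
      unfolding restrict_seq_def by (rule sum_bl_if[OF bl])
    then show "\<exists>M. \<forall>N. norm (\<Sum>n\<le>N. if n \<in> J then L (delta n (z n)) else 0) \<le> M"
      using K by metis
  qed
  show ?thesis
    unfolding conv_rep_def formal_conv_rep_def using bl lim abs by blast
qed



lemma lpw_norm_fin: "lp_w_norm (ereal r) w z = (\<Sum>n. w n * norm (z n) powr r) powr (1 / r)"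
  by (simp add: lp_w_norm_def)
lemma lpw_mem_fin: "lp_w_mem (ereal r) w z = summable (\<lambda>n. w n * norm (z n) powr r)"
  by (simp add: lp_w_mem_def)
lemma lpw_norm_inf: "lp_w_norm \<infinity> w z = (SUP n. w n * norm (z n))"
  by (simp add: lp_w_norm_def)
lemma lpw_mem_inf: "lp_w_mem \<infinity> w z = bounded (range (\<lambda>n. w n * norm (z n)))"
  by (simp add: lp_w_mem_def)

lemma lp_space_fin: "z \<in> lp_space (ereal r) \<longleftrightarrow> summable (\<lambda>n. norm (z n) powr r)"
  by (simp add: lp_space_def lpw_mem_fin)
lemma lp_space_inf: "z \<in> lp_space \<infinity> \<longleftrightarrow> bounded (range (\<lambda>n. norm (z n)))"
  by (simp add: lp_space_def lpw_mem_inf)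
lemma lp_norm_fin: "lp_norm (ereal r) z = (\<Sum>n. norm (z n) powr r) powr (1 / r)"
  by (simp add: lp_norm_def lpw_norm_fin)
lemma lp_norm_inf: "lp_norm \<infinity> z = (SUP n. norm (z n))"
  by (simp add: lp_norm_def lpw_norm_inf)

lemma bounded_norm_range_iff: "bounded (range (\<lambda>n. norm (z n :: 'a::real_normed_vector))) \<longleftrightarrow> (\<exists>B. \<forall>n. norm (z n) \<le> B)"
  unfolding bounded_iff by auto

lemma lp_ball_fin_I:
  fixes a :: "nat \<Rightarrow> real"
  assumes r: "r > 0" and s: "summable (\<lambda>n. a n powr r)" and le: "(\<Sum>n. a n powr r) \<le> 1"
    and a0: "\<And>n. 0 \<le> a n" and za: "\<And>n. norm (z n) \<le> a n"
  shows "z \<in> lp_ball (ereal r)"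
proof -
  have le2: "norm (z n) powr r \<le> a n powr r" for n using za r by (intro powr_mono2) auto
  have sz: "summable (\<lambda>n. norm (z n) powr r)"
    by (rule summable_comparison_test'[OF s]) (use le2 in auto)
  have "(\<Sum>n. norm (z n) powr r) \<le> (\<Sum>n. a n powr r)" by (rule suminf_le[OF le2 sz s])
  then have "(\<Sum>n. norm (z n) powr r) \<le> 1" using le by linarith
  moreover have "0 \<le> (\<Sum>n. norm (z n) powr r)" by (intro suminf_nonneg sz) auto
  ultimately have "(\<Sum>n. norm (z n) powr r) powr (1/r) \<le> 1"
    using r powr_mono2[of "1/r" "(\<Sum>n. norm (z n) powr r)" 1] by simp
  then show ?thesis using sz by (simp add: lp_ball_def lp_space_fin lp_norm_fin)
qed

lemma lp_ball_inf_I: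
  assumes "\<And>n. norm (z n) \<le> 1"
  shows "z \<in> lp_ball \<infinity>"
proof -
  have "bounded (range (\<lambda>n. norm (z n)))" using assms bounded_norm_range_iff by blast
  moreover have "(SUP n. norm (z n)) \<le> 1" using assms by (intro cSUP_least) auto
  ultimately show ?thesis by (simp add: lp_ball_def lp_space_inf lp_norm_inf)
qed

lemma lp_ball_fin_D:
  assumes "z \<in> lp_ball (ereal r)" "r > 0"
  shows "summable (\<lambda>n. norm (z n) powr r)" "(\<Sum>n. norm (z n) powr r) \<le> 1"
proof -
  show s: "summable (\<lambda>n. norm (z n) powr r)" using assms by (simp add: lp_ball_def lp_space_fin)
  have "(\<Sum>n. norm (z n) powr r) powr (1/r) \<le> 1" using assms by (simp add: lp_ball_def lp_norm_fin)
  moreover have "0 \<le> (\<Sum>n. norm (z n) powr r)" by (intro suminf_nonneg s) auto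
  ultimately show "(\<Sum>n. norm (z n) powr r) \<le> 1"
  proof -
    assume a1: "(\<Sum>n. norm (z n) powr r) powr (1/r) \<le> 1"
    show ?thesis
    proof (rule ccontr)
      assume "\<not> ?thesis"
      then have "1 powr (1/r) < (\<Sum>n. norm (z n) powr r) powr (1/r)"
        using assms(2) by (intro powr_less_mono2) auto
      then show False using a1 by simp
    qed
  qed
qed

lemma lp_ball_inf_D:
  assumes "z \<in> lp_ball \<infinity>"
  shows "norm (z n) \<le> 1"
proof -
  have b: "bounded (range (\<lambda>n. norm (z n)))" and s: "(SUP n. norm (z n)) \<le> 1"
    using assms by (auto simp: lp_ball_def lp_space_inf lp_norm_inf)
  have "norm (z n) \<le> (SUP n. norm (z n))"
    using b by (intro cSUP_upper bounded_imp_bdd_above) auto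
  then show ?thesis using s by linarith
qed

lemma c0_mono:
  assumes "a \<in> c0_seq" "\<And>n. norm (z n) \<le> norm (a n)"
  shows "z \<in> c0_seq"
proof -
  have "(\<lambda>n. norm (a n)) \<longlonglongrightarrow> 0" using assms(1) by (simp add: c0_seq_def)
  then have "(\<lambda>n. norm (z n)) \<longlonglongrightarrow> 0"
    by (rule Lim_null_comparison[rotated]) (use assms(2) in auto)
  then show ?thesis by (simp add: c0_seq_def)
qed



lemma WMF:
  assumes cont: "cont_wrt N Zs H"
    and tr: "\<And>z. z \<in> Zs \<Longrightarrow> (\<lambda>T. N (\<lambda>n. trunc T z n - z n)) \<longlonglongrightarrow> 0"
    and dl: "\<And>t u v. N (\<lambda>n. delta t u n - delta t v n) \<le> norm (u - v)"
    and std: "std_assm Zs"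
  shows "minimal_FMP Zs H \<and> minimally_continuous Zs H"
proof
  show "minimal_FMP Zs H" unfolding minimal_FMP_def
  proof
    fix z assume z: "z \<in> Zs"
    show "(\<lambda>T. H (trunc T z)) \<longlonglongrightarrow> H z"
    proof (rule tendstoI)
      fix e :: real assume e: "e > 0"
      obtain d where d0: "d > 0" and d: "\<And>z'. z' \<in> Zs \<Longrightarrow> N (\<lambda>n. z' n - z n) < d \<Longrightarrow> dist (H z') (H z) < e"
        using cont z e unfolding cont_wrt_def by metis
      have "eventually (\<lambda>T. N (\<lambda>n. trunc T z n - z n) < d) sequentially"
        using order_tendstoD(2)[OF tr[OF z] d0] .
      then show "eventually (\<lambda>T. dist (H (trunc T z)) (H z) < e) sequentially"
        by eventually_elim (use d std_trunc[OF std z] in auto)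
    qed
  qed
  show "minimally_continuous Zs H" unfolding minimally_continuous_def continuous_on_iff
  proof (intro allI ballI impI)
    fix t and u :: 'a and e :: real assume u: "u \<in> cball 0 1" and e: "e > 0"
    have du: "delta t u \<in> Zs" using u std_delta[OF std] by simp
    obtain d where d0: "d > 0" and d: "\<And>z'. z' \<in> Zs \<Longrightarrow> N (\<lambda>n. z' n - delta t u n) < d \<Longrightarrow> dist (H z') (H (delta t u)) < e"
      using cont du e unfolding cont_wrt_def by metis
    show "\<exists>d>0. \<forall>u'\<in>cball 0 1. dist u' u < d \<longrightarrow> dist (H (delta t u')) (H (delta t u)) < e"
    proof (intro exI[of _ d] conjI ballI impI d0)
      fix u' :: 'a assume u': "u' \<in> cball 0 1" and du': "dist u' u < d"
      have "N (\<lambda>n. delta t u' n - delta t u n) < d"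
        using dl[of t u' u] du' by (simp add: dist_norm)
      then show "dist (H (delta t u')) (H (delta t u)) < e"
        using d[of "delta t u'"] u' std_delta[OF std] by simp
    qed
  qed
qed

lemma trunc_diff: "trunc T z n - z n = (if n \<le> T then 0 else - z n)"
  by (simp add: trunc_def)

lemma TR_fin:
  assumes r: "r > 0" and w: "\<And>n. 0 \<le> w n \<and> w n \<le> 1" and z: "z \<in> lp_space (ereal r)"
  shows "(\<lambda>T. lp_w_norm (ereal r) w (\<lambda>n. trunc T z n - z n)) \<longlonglongrightarrow> 0"
proof -
  define g where "g n = w n * norm (z n) powr r" for n
  have g0: "g n \<ge> 0" for n using w by (simp add: g_def)
  have sg: "summable g"
  proof (rule summable_comparison_test'[of "\<lambda>n. norm (z n) powr r"])
    show "summable (\<lambda>n. norm (z n) powr r)" using z by (simp add: lp_space_fin)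
    show "norm (g n) \<le> norm (z n) powr r" for n
      using w[of n] g0[of n] by (simp add: g_def mult_left_le_one_le)
  qed
  define h where "h T n = (if n \<le> T then g n else 0)" for T n
  have hs: "h T sums (\<Sum>n\<le>T. g n)" for T
  proof -
    have "h T sums (sum (h T) {..T})" by (rule sums_finite) (auto simp: h_def)
    moreover have "sum (h T) {..T} = (\<Sum>n\<le>T. g n)" by (simp add: h_def)
    ultimately show ?thesis by simp
  qed
  have sd: "(\<lambda>n. g n - h T n) sums (suminf g - (\<Sum>n\<le>T. g n))" for T
    by (intro sums_diff summable_sums sg hs)
  have eq: "(\<Sum>n. w n * norm (trunc T z n - z n) powr r) = suminf g - (\<Sum>n\<le>T. g n)" for T
  proof -
    have "(\<lambda>n. w n * norm (trunc T z n - z n) powr r) = (\<lambda>n. g n - h T n)"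
      by (auto simp: trunc_diff g_def h_def)
    then show ?thesis using sd[of T] by (simp add: sums_iff)
  qed
  have lim: "(\<lambda>T. suminf g - (\<Sum>n\<le>T. g n)) \<longlonglongrightarrow> 0"
  proof -
    have "(\<lambda>T. (\<Sum>n\<le>T. g n)) \<longlonglongrightarrow> suminf g" by (rule summable_LIMSEQ'[OF sg])
    then have "(\<lambda>T. suminf g - (\<Sum>n\<le>T. g n)) \<longlonglongrightarrow> suminf g - suminf g"
      by (intro tendsto_diff tendsto_const)
    then show ?thesis by simp
  qed
  have nn: "0 \<le> suminf g - (\<Sum>n\<le>T. g n)" for T
  proof -
    have "0 \<le> suminf (\<lambda>n. g n - h T n)"
      by (rule suminf_nonneg[OF sums_summable[OF sd[of T]]]) (use g0 in \<open>auto simp: h_def\<close>)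
    then show ?thesis using sd[of T] by (simp add: sums_iff)
  qed
  have "(\<lambda>T. (suminf g - (\<Sum>n\<le>T. g n)) powr (1 / r)) \<longlonglongrightarrow> 0"
    by (rule tendsto_zero_powrI[OF lim tendsto_const]) (use nn r in auto)
  then show ?thesis by (simp add: lpw_norm_fin eq)
qed

lemma TR_inf_w:
  assumes w: "\<And>n. 0 \<le> w n" and dw: "decseq w" and wl: "w \<longlonglongrightarrow> 0" and z: "z \<in> lp_space \<infinity>"
  shows "(\<lambda>T. lp_w_norm \<infinity> w (\<lambda>n. trunc T z n - z n)) \<longlonglongrightarrow> 0"
proof -
  obtain B where B: "\<And>n. norm (z n) \<le> B" using z by (auto simp: lp_space_inf bounded_norm_range_iff)
  have B0: "B \<ge> 0" using B[of 0] norm_ge_zero[of "z 0"] by linarith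
  have term_le: "w n * norm (trunc T z n - z n) \<le> w (Suc T) * B" for T n
  proof (cases "n \<le> T")
    case True then show ?thesis using w B0 by (simp add: trunc_diff)
  next
    case False
    then have "w n \<le> w (Suc T)" using dw by (simp add: decseq_def)
    then show ?thesis using False w B by (simp add: trunc_diff mult_mono)
  qed
  have up: "(SUP n. w n * norm (trunc T z n - z n)) \<le> w (Suc T) * B" for T
    by (rule cSUP_least) (use term_le in auto)
  have lo: "0 \<le> (SUP n. w n * norm (trunc T z n - z n))" for T
  proof -
    have "w 0 * norm (trunc T z 0 - z 0) \<le> (SUP n. w n * norm (trunc T z n - z n))"
      by (rule cSUP_upper) (use term_le in \<open>auto intro!: bdd_aboveI2[where M="w (Suc T) * B"]\<close>)
    then show ?thesis by (simp add: trunc_diff)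
  qed
  have "(\<lambda>T. w (Suc T)) \<longlonglongrightarrow> 0" by (rule LIMSEQ_Suc[OF wl])
  then have wB: "(\<lambda>T. w (Suc T) * B) \<longlonglongrightarrow> 0" by (rule tendsto_mult_left_zero)
  have "(\<lambda>T. (SUP n. w n * norm (trunc T z n - z n))) \<longlonglongrightarrow> 0"
  proof (rule real_tendsto_sandwich[of "\<lambda>_. 0" _ _ "\<lambda>T. w (Suc T) * B"])
    show "\<forall>\<^sub>F T in sequentially. 0 \<le> (SUP n. w n * norm (trunc T z n - z n))" using lo by simp
    show "\<forall>\<^sub>F T in sequentially. (SUP n. w n * norm (trunc T z n - z n)) \<le> w (Suc T) * B" using up by simp
  qed (use wB in auto)
  then show ?thesis by (simp add: lpw_norm_inf)
qed

lemma TR_inf_c0: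
  assumes z: "z \<in> c0_seq"
  shows "(\<lambda>T. lp_w_norm \<infinity> (\<lambda>_. 1) (\<lambda>n. trunc T z n - z n)) \<longlonglongrightarrow> 0"
proof (rule LIMSEQ_I)
  fix e :: real assume e: "e > 0"
  have "(\<lambda>n. norm (z n)) \<longlonglongrightarrow> 0" using z by (simp add: c0_seq_def)
  then obtain M where M: "\<And>n. n \<ge> M \<Longrightarrow> norm (z n) < e / 2"
    using LIMSEQ_D[of "\<lambda>n. norm (z n)" 0 "e/2"] e by auto
  show "\<exists>no. \<forall>T\<ge>no. norm (lp_w_norm \<infinity> (\<lambda>_. 1) (\<lambda>n. trunc T z n - z n) - 0) < e"
  proof (intro exI allI impI)
    fix T assume T: "M \<le> T"
    have term_le: "norm (trunc T z n - z n) \<le> e / 2" for n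
      using M[of n] T e by (auto simp: trunc_diff)
    have up: "(SUP n. norm (trunc T z n - z n)) \<le> e / 2"
      by (rule cSUP_least) (use term_le in auto)
    have "norm (trunc T z 0 - z 0) \<le> (SUP n. norm (trunc T z n - z n))"
      by (rule cSUP_upper) (use term_le in \<open>auto intro!: bdd_aboveI2[where M="e/2"]\<close>)
    then have lo: "0 \<le> (SUP n. norm (trunc T z n - z n))" by (simp add: trunc_diff)
    show "norm (lp_w_norm \<infinity> (\<lambda>_. 1) (\<lambda>n. trunc T z n - z n) - 0) < e"
      using up lo e by (simp add: lpw_norm_inf)
  qed
qed

lemma delta_diff: "delta t u n - delta t v n = delta t (u - v) n"
  by (simp add: delta_def)

lemma lpw_delta_fin:
  assumes r: "r > 0"
  shows "lp_w_norm (ereal r) w (delta t u) = (w t * norm u powr r) powr (1 / r)"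
proof -
  have "(\<Sum>n. w n * norm (delta t u n) powr r) = (\<Sum>n\<in>{t}. w n * norm (delta t u n) powr r)"
    by (rule suminf_finite) (auto simp: delta_def)
  then show ?thesis by (simp add: lpw_norm_fin delta_def)
qed

lemma DL_fin:
  assumes r: "r > 0" and w: "\<And>n. 0 \<le> w n \<and> w n \<le> 1"
  shows "lp_w_norm (ereal r) w (\<lambda>n. delta t u n - delta t v n) \<le> norm (u - v)"
proof -
  have "lp_w_norm (ereal r) w (\<lambda>n. delta t u n - delta t v n) = (w t * norm (u - v) powr r) powr (1 / r)"
    unfolding delta_diff using lpw_delta_fin[OF r, of w t "u - v"] by (simp add: delta_def)
  also have "\<dots> \<le> (norm (u - v) powr r) powr (1 / r)"
    using w[of t] r by (intro powr_mono2) (auto simp: mult_left_le_one_le)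
  also have "\<dots> = norm (u - v)" using r by (simp add: powr_powr)
  finally show ?thesis .
qed

lemma DL_inf:
  assumes w: "\<And>n. 0 \<le> w n \<and> w n \<le> 1"
  shows "lp_w_norm \<infinity> w (\<lambda>n. delta t u n - delta t v n) \<le> norm (u - v)"
  unfolding lpw_norm_inf
proof (rule cSUP_least)
  fix n
  show "w n * norm (delta t u n - delta t v n) \<le> norm (u - v)"
    using w[of n] by (auto simp: delta_def mult_left_le_one_le)
qed simp



lemma conv_rep_bound:
  assumes cr: "conv_rep Zs H \<kappa>" and z: "z \<in> Zs" and z': "z' \<in> Zs"
    and s: "summable (\<lambda>n. onorm (\<kappa> n) * norm (z' n - z n))"
  shows "norm (H z' - H z) \<le> (\<Sum>n. onorm (\<kappa> n) * norm (z' n - z n))"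
proof -
  have bl: "bounded_linear (\<kappa> n)" for n by (rule conv_rep_bl[OF cr])
  have "(\<lambda>T. (\<Sum>n\<le>T. \<kappa> n (z' n)) - (\<Sum>n\<le>T. \<kappa> n (z n))) \<longlonglongrightarrow> H z' - H z"
    by (intro tendsto_diff conv_rep_lim[OF cr] z z')
  moreover have "(\<Sum>n\<le>T. \<kappa> n (z' n)) - (\<Sum>n\<le>T. \<kappa> n (z n)) = (\<Sum>n\<le>T. \<kappa> n (z' n - z n))" for T
    by (simp add: sum_subtractf[symmetric] linear_simps[OF bl])
  ultimately have lim: "(\<lambda>T. \<Sum>n\<le>T. \<kappa> n (z' n - z n)) \<longlonglongrightarrow> H z' - H z" by simp
  have bnd: "norm (\<Sum>n\<le>T. \<kappa> n (z' n - z n)) \<le> (\<Sum>n. onorm (\<kappa> n) * norm (z' n - z n))" for T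
  proof -
    have "norm (\<Sum>n\<le>T. \<kappa> n (z' n - z n)) \<le> (\<Sum>n\<le>T. norm (\<kappa> n (z' n - z n)))" by (rule norm_sum)
    also have "\<dots> \<le> (\<Sum>n\<le>T. onorm (\<kappa> n) * norm (z' n - z n))"
      by (intro sum_mono onorm[OF bl])
    also have "\<dots> \<le> (\<Sum>n. onorm (\<kappa> n) * norm (z' n - z n))"
      by (rule sum_le_suminf[OF s]) (auto intro!: mult_nonneg_nonneg onorm_pos_le[OF bl])
    finally show ?thesis .
  qed
  show ?thesis
    by (rule LIMSEQ_le_const2[OF tendsto_norm[OF lim]]) (use bnd in auto)
qed

lemma cont_from_bound:
  assumes K0: "K \<ge> 0" and b: "\<And>z z'. z \<in> Zs \<Longrightarrow> z' \<in> Zs \<Longrightarrow> norm (H z' - H z) \<le> K * N (\<lambda>n. z' n - z n)"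
  shows "cont_wrt N Zs H"
  unfolding cont_wrt_def
proof (intro ballI allI impI)
  fix z e assume z: "z \<in> Zs" and e: "(e::real) > 0"
  show "\<exists>d>0. \<forall>z'\<in>Zs. N (\<lambda>n. z' n - z n) < d \<longrightarrow> dist (H z') (H z) < e"
  proof (intro exI[of _ "e / (K + 1)"] conjI ballI impI)
    show "e / (K + 1) > 0" using e K0 by simp
    fix z' assume z': "z' \<in> Zs" and d: "N (\<lambda>n. z' n - z n) < e / (K + 1)"
    have "dist (H z') (H z) \<le> K * N (\<lambda>n. z' n - z n)" using b[OF z z'] by (simp add: dist_norm)
    also have "\<dots> \<le> K * (e / (K + 1))" using d K0 by (intro mult_left_mono) auto
    also have "\<dots> < e" using e K0 by (simp add: field_simps)
    finally show "dist (H z') (H z) < e" .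
  qed
qed

lemma powr_sum_le:
  fixes a b r :: real
  assumes "a \<ge> 0" "b \<ge> 0" "r > 0"
  shows "(a + b) powr r \<le> 2 powr r * (a powr r + b powr r)"
proof -
  have "(a + b) powr r \<le> (2 * max a b) powr r" using assms by (intro powr_mono2) auto
  also have "\<dots> = 2 powr r * max a b powr r" using assms by (simp add: powr_mult)
  also have "max a b powr r \<le> a powr r + b powr r" by (cases "a \<le> b") (auto simp: max_def)
  then have "2 powr r * max a b powr r \<le> 2 powr r * (a powr r + b powr r)" by simp
  finally show ?thesis .
qed

lemma lp_diff_fin:
  assumes r: "r > 0" and z: "z \<in> lp_space (ereal r)" and z': "z' \<in> lp_space (ereal r)"
  shows "summable (\<lambda>n. norm (z' n - z n) powr r)"
proof (rule summable_comparison_test'[of "\<lambda>n. 2 powr r * (norm (z' n) powr r + norm (z n) powr r)"])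
  show "summable (\<lambda>n. 2 powr r * (norm (z' n) powr r + norm (z n) powr r))"
    using z z' by (intro summable_mult summable_add) (auto simp: lp_space_fin)
  fix n
  have "norm (z' n - z n) powr r \<le> (norm (z' n) + norm (z n)) powr r"
    using r by (intro powr_mono2 norm_triangle_ineq4) auto
  also have "\<dots> \<le> 2 powr r * (norm (z' n) powr r + norm (z n) powr r)"
    using r by (intro powr_sum_le) auto
  finally show "norm (norm (z' n - z n) powr r) \<le> 2 powr r * (norm (z' n) powr r + norm (z n) powr r)"
    by simp
qed

lemma holder_series:
  fixes x y :: "nat \<Rightarrow> real"
  assumes pq: "p > 1" "q > 1" "1 / p + 1 / q = 1"
    and x0: "\<And>n. x n \<ge> 0" and y0: "\<And>n. y n \<ge> 0"
    and sx: "summable (\<lambda>n. x n powr p)" and sy: "summable (\<lambda>n. y n powr q)"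
  shows "summable (\<lambda>n. x n * y n) \<and> (\<Sum>n. x n * y n) \<le> (\<Sum>n. x n powr p) powr (1/p) * (\<Sum>n. y n powr q) powr (1/q)"
proof -
  define A where "A = (\<Sum>n. x n powr p)"
  define B where "B = (\<Sum>n. y n powr q)"
  have A0: "A \<ge> 0" unfolding A_def by (intro suminf_nonneg sx) auto
  have B0: "B \<ge> 0" unfolding B_def by (intro suminf_nonneg sy) auto
  show ?thesis
  proof (cases "A = 0 \<or> B = 0")
    case True
    then have "(\<forall>n. x n powr p = 0) \<or> (\<forall>n. y n powr q = 0)"
      unfolding A_def B_def using suminf_eq_zero_iff[OF sx] suminf_eq_zero_iff[OF sy] by auto
    then have "(\<lambda>n. x n * y n) = (\<lambda>n. 0)" by auto
    then show ?thesis by simp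
  next
    case False
    then have Ap: "A > 0" and Bp: "B > 0" using A0 B0 by auto
    define \<alpha> where "\<alpha> = A powr (1/p)"
    define \<beta> where "\<beta> = B powr (1/q)"
    have al: "\<alpha> > 0" "\<beta> > 0" using Ap Bp by (auto simp: \<alpha>_def \<beta>_def)
    have ap: "\<alpha> powr p = A" using Ap pq by (simp add: \<alpha>_def powr_powr)
    have bq: "\<beta> powr q = B" using Bp pq by (simp add: \<beta>_def powr_powr)
    define u where "u n = \<alpha> * \<beta> * (x n powr p / (A * p) + y n powr q / (B * q))" for n
    have le: "x n * y n \<le> u n" for n
    proof -
      have "(x n / \<alpha>) * (y n / \<beta>) \<le> (x n / \<alpha>) powr p / p + (y n / \<beta>) powr q / q"
        using pq x0[of n] y0[of n] al by (intro Youngs_inequality) auto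
      also have "(x n / \<alpha>) powr p = x n powr p / A"
        using x0[of n] al ap by (simp add: powr_divide)
      also have "(y n / \<beta>) powr q = y n powr q / B"
        using y0[of n] al bq by (simp add: powr_divide)
      finally have "(x n / \<alpha>) * (y n / \<beta>) \<le> x n powr p / (A * p) + y n powr q / (B * q)"
        by (simp add: field_simps)
      then have "\<alpha> * \<beta> * ((x n / \<alpha>) * (y n / \<beta>)) \<le> u n"
        unfolding u_def using al by (intro mult_left_mono) auto
      then show ?thesis using al by (simp add: field_simps)
    qed
    have su: "u sums (\<alpha> * \<beta> * (A / (A * p) + B / (B * q)))"
      unfolding u_def A_def B_def
      by (intro sums_mult sums_add sums_divide summable_sums sx sy)
    have "\<alpha> * \<beta> * (A / (A * p) + B / (B * q)) = \<alpha> * \<beta>"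
      using Ap Bp pq by (simp add: field_simps)
    with su have su': "u sums (\<alpha> * \<beta>)" by metis
    have sxy: "summable (\<lambda>n. x n * y n)"
      by (rule summable_comparison_test'[OF sums_summable[OF su']]) (use le x0 y0 in auto)
    have "(\<Sum>n. x n * y n) \<le> (\<Sum>n. u n)" by (rule suminf_le[OF le sxy sums_summable[OF su']])
    also have "\<dots> = \<alpha> * \<beta>" using su' by (simp add: sums_iff)
    finally show ?thesis using sxy by (simp add: \<alpha>_def \<beta>_def A_def B_def)
  qed
qed



lemma Cont_one:
  assumes cr: "conv_rep Zs H \<kappa>" and up: "Zs \<subseteq> lp_space (ereal 1)"
    and w: "\<And>n. 0 \<le> w n \<and> w n \<le> 1" and K0: "K \<ge> 0" and kw: "\<And>n. onorm (\<kappa> n) \<le> K * w n"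
  shows "cont_wrt (lp_w_norm (ereal 1) w) Zs H"
proof (rule cont_from_bound[OF K0])
  fix z z' assume z: "z \<in> Zs" and z': "z' \<in> Zs"
  have bl: "bounded_linear (\<kappa> n)" for n by (rule conv_rep_bl[OF cr])
  have sd: "summable (\<lambda>n. norm (z' n - z n))"
    using lp_diff_fin[of 1 z z'] z z' up by auto
  have swd: "summable (\<lambda>n. w n * norm (z' n - z n))"
    by (rule summable_comparison_test'[OF sd]) (use w in \<open>auto simp: mult_left_le_one_le\<close>)
  have le: "onorm (\<kappa> n) * norm (z' n - z n) \<le> K * (w n * norm (z' n - z n))" for n
    using kw[of n] by (simp add: mult_right_mono mult.assoc[symmetric])
  have nn: "0 \<le> onorm (\<kappa> n) * norm (z' n - z n)" for n
    using onorm_pos_le[OF bl] by simp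
  have s: "summable (\<lambda>n. onorm (\<kappa> n) * norm (z' n - z n))"
    by (rule summable_comparison_test'[OF summable_mult[OF swd, of K]])
       (use le nn in auto)
  have "norm (H z' - H z) \<le> (\<Sum>n. onorm (\<kappa> n) * norm (z' n - z n))"
    by (rule conv_rep_bound[OF cr z z' s])
  also have "\<dots> \<le> (\<Sum>n. K * (w n * norm (z' n - z n)))"
    by (rule suminf_le[OF le s summable_mult[OF swd]])
  also have "\<dots> = K * (\<Sum>n. w n * norm (z' n - z n))" by (rule suminf_mult[OF swd])
  also have "(\<Sum>n. w n * norm (z' n - z n)) = lp_w_norm (ereal 1) w (\<lambda>n. z' n - z n)"
  proof -
    have "0 \<le> (\<Sum>n. w n * norm (z' n - z n))" by (rule suminf_nonneg[OF swd]) (use w in auto)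
    then show ?thesis by (simp add: lpw_norm_fin)
  qed
  finally show "norm (H z' - H z) \<le> K * lp_w_norm (ereal 1) w (\<lambda>n. z' n - z n)" .
qed

lemma Cont_inf:
  assumes cr: "conv_rep Zs H \<kappa>" and up: "Zs \<subseteq> lp_space \<infinity>"
    and w: "\<And>n. 0 < w n \<and> w n \<le> 1" and sk: "summable (\<lambda>n. onorm (\<kappa> n) / w n)"
  shows "cont_wrt (lp_w_norm \<infinity> w) Zs H"
proof (rule cont_from_bound)
  have bl: "bounded_linear (\<kappa> n)" for n by (rule conv_rep_bl[OF cr])
  show K0: "(\<Sum>n. onorm (\<kappa> n) / w n) \<ge> 0"
  proof (rule suminf_nonneg[OF sk])
    fix n show "0 \<le> onorm (\<kappa> n) / w n" using w[of n] onorm_pos_le[OF bl, of n] by simp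
  qed
  fix z z' assume z: "z \<in> Zs" and z': "z' \<in> Zs"
  have "z \<in> lp_space \<infinity>" "z' \<in> lp_space \<infinity>" using z z' up by auto
  then obtain B B' where B: "\<And>n. norm (z n) \<le> B" and B': "\<And>n. norm (z' n) \<le> B'"
    by (auto simp: lp_space_inf bounded_norm_range_iff)
  define V where "V = (SUP n. w n * norm (z' n - z n))"
  have tb: "w n * norm (z' n - z n) \<le> B' + B" for n
  proof -
    have "w n * norm (z' n - z n) \<le> norm (z' n - z n)" using w[of n] by (simp add: mult_left_le_one_le)
    also have "\<dots> \<le> norm (z' n) + norm (z n)" by (rule norm_triangle_ineq4)
    finally show ?thesis using B[of n] B'[of n] by linarith
  qed
  have tV: "w n * norm (z' n - z n) \<le> V" for n
    unfolding V_def by (rule cSUP_upper) (use tb in \<open>auto intro!: bdd_aboveI2[where M="B' + B"]\<close>)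
  have V0: "V \<ge> 0" using tV[of 0] w[of 0] by (meson mult_nonneg_nonneg norm_ge_zero order.trans less_imp_le)
  have le: "onorm (\<kappa> n) * norm (z' n - z n) \<le> (onorm (\<kappa> n) / w n) * V" for n
  proof -
    have "onorm (\<kappa> n) * norm (z' n - z n) = (onorm (\<kappa> n) / w n) * (w n * norm (z' n - z n))"
      using w[of n] by (simp add: field_simps)
    also have "\<dots> \<le> (onorm (\<kappa> n) / w n) * V"
      using tV[of n] w[of n] onorm_pos_le[OF bl, of n] by (intro mult_left_mono) auto
    finally show ?thesis .
  qed
  have s: "summable (\<lambda>n. onorm (\<kappa> n) * norm (z' n - z n))"
    by (rule summable_comparison_test'[OF summable_mult2[OF sk, of V]])
       (use le onorm_pos_le[OF bl] in auto)
  have "norm (H z' - H z) \<le> (\<Sum>n. onorm (\<kappa> n) * norm (z' n - z n))"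
    by (rule conv_rep_bound[OF cr z z' s])
  also have "\<dots> \<le> (\<Sum>n. (onorm (\<kappa> n) / w n) * V)"
    by (rule suminf_le[OF le s summable_mult2[OF sk]])
  also have "\<dots> = (\<Sum>n. onorm (\<kappa> n) / w n) * V" by (rule suminf_mult2[OF sk, symmetric])
  finally show "norm (H z' - H z) \<le> (\<Sum>n. onorm (\<kappa> n) / w n) * lp_w_norm \<infinity> w (\<lambda>n. z' n - z n)"
    by (simp add: V_def lpw_norm_inf)
qed

lemma Cont_fin:
  assumes cr: "conv_rep Zs H \<kappa>" and up: "Zs \<subseteq> lp_space (ereal r)"
    and pq: "r > 1" "q > 1" "1 / r + 1 / q = 1"
    and w: "\<And>n. 0 < w n \<and> w n \<le> 1"
    and sk: "summable (\<lambda>n. onorm (\<kappa> n) powr q * w n powr (- (q / r)))"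
  shows "cont_wrt (lp_w_norm (ereal r) w) Zs H"
proof (rule cont_from_bound)
  have bl: "bounded_linear (\<kappa> n)" for n by (rule conv_rep_bl[OF cr])
  define K where "K = (\<Sum>n. onorm (\<kappa> n) powr q * w n powr (- (q / r))) powr (1 / q)"
  show K0: "K \<ge> 0" by (simp add: K_def)
  fix z z' assume z: "z \<in> Zs" and z': "z' \<in> Zs"
  define x where "x n = w n powr (1 / r) * norm (z' n - z n)" for n
  define y where "y n = onorm (\<kappa> n) * w n powr (- (1 / r))" for n
  have x0: "x n \<ge> 0" for n by (simp add: x_def)
  have y0: "y n \<ge> 0" for n by (simp add: y_def onorm_pos_le[OF bl])
  have xy: "x n * y n = onorm (\<kappa> n) * norm (z' n - z n)" for n
  proof -
    have "w n powr (1 / r) * w n powr (- (1 / r)) = 1"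
      using w[of n] by (simp add: powr_add[symmetric])
    then show ?thesis unfolding x_def y_def by (metis (no_types, lifting) mult.assoc mult.commute mult.left_commute mult_1)
  qed
  have xp: "x n powr r = w n * norm (z' n - z n) powr r" for n
    using w[of n] pq by (simp add: x_def powr_mult powr_powr)
  have yq: "y n powr q = onorm (\<kappa> n) powr q * w n powr (- (q / r))" for n
    using w[of n] pq onorm_pos_le[OF bl, of n] by (simp add: y_def powr_mult powr_powr)
  have sd: "summable (\<lambda>n. norm (z' n - z n) powr r)"
    using lp_diff_fin[of r z z'] z z' up pq by auto
  have sx: "summable (\<lambda>n. x n powr r)"
    unfolding xp by (rule summable_comparison_test'[OF sd]) (use w in \<open>auto simp: mult_left_le_one_le less_imp_le\<close>)
  have sy: "summable (\<lambda>n. y n powr q)" unfolding yq by (rule sk)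
  from holder_series[OF pq x0 y0 sx sy]
  have s: "summable (\<lambda>n. onorm (\<kappa> n) * norm (z' n - z n))"
    and hb: "(\<Sum>n. onorm (\<kappa> n) * norm (z' n - z n)) \<le> (\<Sum>n. x n powr r) powr (1/r) * (\<Sum>n. y n powr q) powr (1/q)"
    unfolding xy by auto
  have "norm (H z' - H z) \<le> (\<Sum>n. onorm (\<kappa> n) * norm (z' n - z n))"
    by (rule conv_rep_bound[OF cr z z' s])
  also have "\<dots> \<le> (\<Sum>n. x n powr r) powr (1/r) * (\<Sum>n. y n powr q) powr (1/q)" by (rule hb)
  also have "\<dots> = K * lp_w_norm (ereal r) w (\<lambda>n. z' n - z n)"
    by (simp add: K_def lpw_norm_fin xp yq)
  finally show "norm (H z' - H z) \<le> K * lp_w_norm (ereal r) w (\<lambda>n. z' n - z n)" .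
qed



lemma AD_div:
  fixes d :: "nat \<Rightarrow> real"
  assumes d0: "\<And>n. d n \<ge> 0" and dpos: "d 0 > 0" and unb: "\<And>M. \<exists>n. (\<Sum>k\<le>n. d k) > M"
  shows "\<not> summable (\<lambda>n. d n / (\<Sum>k\<le>n. d k))"
proof
  define S where "S n = (\<Sum>k\<le>n. d k)" for n
  have Smono: "S m \<le> S n" if "m \<le> n" for m n
    unfolding S_def using that d0 by (intro sum_mono2) auto
  have Spos: "S n > 0" for n using Smono[of 0 n] dpos by (simp add: S_def)
  assume s: "summable (\<lambda>n. d n / (\<Sum>k\<le>n. d k))"
  then have s': "summable (\<lambda>n. d n / S n)" by (simp add: S_def)
  obtain N where N: "\<And>m n. m \<ge> N \<Longrightarrow> norm (\<Sum>k=m..<n. d k / S k) < 1/2"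
    using s' unfolding summable_Cauchy by (meson half_gt_zero zero_less_one)
  obtain n where n: "S n > 2 * S N" using unb unfolding S_def by blast
  have Nn: "N < n"
  proof (rule ccontr)
    assume "\<not> N < n" then have "S n \<le> S N" using Smono by simp
    then show False using n Spos[of N] by linarith
  qed
  have sumd: "(\<Sum>k=Suc N..<Suc n. d k) = S n - S N"
  proof -
    have "(\<Sum>k=0..<Suc n. d k) - (\<Sum>k=0..<Suc N. d k) = (\<Sum>k=Suc N..<Suc n. d k)"
      using Nn by (intro sum_diff_nat_ivl) auto
    moreover have "(\<Sum>k=0..<Suc m. d k) = S m" for m
      unfolding S_def by (simp only: atLeast0LessThan lessThan_Suc_atMost)
    ultimately show ?thesis by metis
  qed
  have "(S n - S N) / S n = (\<Sum>k=Suc N..<Suc n. d k / S n)"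
    by (simp only: sumd sum_divide_distrib[symmetric])
  also have "\<dots> \<le> (\<Sum>k=Suc N..<Suc n. d k / S k)"
  proof (rule sum_mono)
    fix k assume "k \<in> {Suc N..<Suc n}"
    then have "S k \<le> S n" using Smono by simp
    then show "d k / S n \<le> d k / S k" using d0[of k] Spos[of k] by (intro divide_left_mono) auto
  qed
  also have "\<dots> < 1/2" using N[of "Suc N" "Suc n"] by simp
  finally have "(S n - S N) / S n < 1/2" .
  moreover have "(S n - S N) / S n \<ge> 1/2" using n Spos[of n] Spos[of N] by (simp add: field_simps)
  ultimately show False by simp
qed

lemma key_ineq:
  fixes a b p :: real
  assumes a: "0 < a" and ab: "a \<le> b" and p: "p > 1"
  shows "(b - a) / b powr p \<le> (a powr (1 - p) - b powr (1 - p)) / (p - 1)"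
proof -
  have b: "b > 0" using a ab by simp
  define t where "t = a / b"
  have t0: "t > 0" and t1: "t \<le> 1" using a ab b by (auto simp: t_def)
  have "ln t \<le> t - 1" using t0 by (rule ln_le_minus_one)
  have "t powr (1 - p) = exp ((1 - p) * ln t)" using t0 by (simp add: powr_def)
  also have "\<dots> \<ge> 1 + (1 - p) * ln t" by (rule exp_ge_add_one_self)
  finally have "t powr (1 - p) \<ge> 1 + (1 - p) * ln t" .
  moreover have "(1 - p) * ln t \<ge> (p - 1) * (1 - t)"
  proof -
    have "(p - 1) * (1 - t) \<le> (p - 1) * (- ln t)"
      using \<open>ln t \<le> t - 1\<close> p by (intro mult_left_mono) auto
    then show ?thesis by (simp add: algebra_simps)
  qed
  ultimately have T: "t powr (1 - p) - 1 \<ge> (p - 1) * (1 - t)" by linarith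
  have bp: "b powr (1 - p) = b / b powr p" using b by (simp add: powr_diff)
  have ap: "a powr (1 - p) = t powr (1 - p) * b powr (1 - p)"
    using t0 b by (simp add: t_def powr_mult[symmetric])
  have "(b - a) / b powr p = (1 - t) * b powr (1 - p)"
    using b by (simp add: bp t_def field_simps)
  also have "\<dots> \<le> (t powr (1 - p) - 1) / (p - 1) * b powr (1 - p)"
    using T p by (intro mult_right_mono) (auto simp: field_simps)
  also have "\<dots> = (a powr (1 - p) - b powr (1 - p)) / (p - 1)"
    by (simp add: ap field_simps)
  finally show ?thesis .
qed

lemma AD_conv:
  fixes d :: "nat \<Rightarrow> real"
  assumes d0: "\<And>n. d n \<ge> 0" and dpos: "d 0 > 0" and p: "p > 1"
  shows "summable (\<lambda>n. d n / (\<Sum>k\<le>n. d k) powr p)"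
proof -
  define S where "S n = (\<Sum>k\<le>n. d k)" for n
  have Smono: "S m \<le> S n" if "m \<le> n" for m n
    unfolding S_def using that d0 by (intro sum_mono2) auto
  have Spos: "S n > 0" for n using Smono[of 0 n] dpos by (simp add: S_def)
  have SS: "S (Suc n) = S n + d (Suc n)" for n by (simp add: S_def)
  define g where "g n = S n powr (1 - p) / (p - 1)" for n
  have le: "d (Suc n) / S (Suc n) powr p \<le> g n - g (Suc n)" for n
  proof -
    have "d (Suc n) / S (Suc n) powr p = (S (Suc n) - S n) / S (Suc n) powr p" by (simp add: SS)
    also have "\<dots> \<le> (S n powr (1 - p) - S (Suc n) powr (1 - p)) / (p - 1)"
      using Spos[of n] SS[of n] d0[of "Suc n"] p by (intro key_ineq) auto
    also have "\<dots> = g n - g (Suc n)" by (simp add: g_def diff_divide_distrib)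
    finally show ?thesis .
  qed
  have g0: "g n \<ge> 0" for n using p by (simp add: g_def)
  have "summable (\<lambda>n. d (Suc n) / S (Suc n) powr p)"
  proof (rule summableI_nonneg_bounded)
    show "0 \<le> d (Suc n) / S (Suc n) powr p" for n using d0[of "Suc n"] by simp
    fix N
    have "(\<Sum>n<N. d (Suc n) / S (Suc n) powr p) \<le> (\<Sum>n<N. g n - g (Suc n))"
      by (intro sum_mono le)
    also have "\<dots> = g 0 - g N" by (rule sum_lessThan_telescope')
    also have "\<dots> \<le> g 0" using g0[of N] by simp
    finally show "(\<Sum>n<N. d (Suc n) / S (Suc n) powr p) \<le> g 0" .
  qed
  then have "summable (\<lambda>n. d n / S n powr p)" by (subst summable_Suc_iff[symmetric])
  then show ?thesis by (simp add: S_def)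
qed

lemma unbounded_partial:
  fixes c :: "nat \<Rightarrow> real"
  assumes c0: "\<And>n. c n \<ge> 0" and ns: "\<not> summable c"
  shows "\<exists>n. (\<Sum>k\<le>n. c k) > M"
proof (rule ccontr)
  assume "\<not> ?thesis"
  then have "\<And>n. (\<Sum>k\<le>n. c k) \<le> M" by (simp add: not_less)
  then have "summable c" by (rule bounded_imp_summable[OF c0])
  with ns show False by simp
qed

fun runmax :: "(nat \<Rightarrow> real) \<Rightarrow> nat \<Rightarrow> real" where
  "runmax c 0 = max 1 (c 0)"
| "runmax c (Suc n) = max (runmax c n) (c (Suc n))"

lemma runmax_ge1: "runmax c n \<ge> 1"
  by (induction n) auto

lemma runmax_ge: "c n \<le> runmax c n"
  by (cases n) auto

lemma runmax_mono: "m \<le> n \<Longrightarrow> runmax c m \<le> runmax c n"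
proof (induction n)
  case 0 then show ?case by simp
next
  case (Suc n) then show ?case by (cases "m = Suc n") (auto simp: le_Suc_eq intro: order.trans)
qed



lemma shift_nonsummable:
  fixes f g :: "nat \<Rightarrow> real"
  assumes eq: "\<And>n. g (Suc n) = f (Suc n) / k" and ns: "\<not> summable g"
  shows "\<not> summable f"
proof
  assume "summable f"
  then have "summable (\<lambda>n. f (Suc n))" by (subst summable_Suc_iff)
  then have "summable (\<lambda>n. f (Suc n) / k)" by (rule summable_divide)
  then have "summable (\<lambda>n. g (Suc n))" by (simp add: eq)
  then have "summable g" by (subst (asm) summable_Suc_iff)
  with ns show False by simp
qed

lemma partial_shift:
  fixes c :: "nat \<Rightarrow> real"
  shows "(\<Sum>k\<le>n. (if k = 0 then x + c 0 else c k)) = x + (\<Sum>k\<le>n. c k)"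
  by (induction n) auto

lemma S3:
  fixes c :: "nat \<Rightarrow> real"
  assumes c0: "\<And>n. c n \<ge> 0" and ns: "\<not> summable c"
  shows "\<exists>a. (\<forall>n. 0 \<le> a n \<and> a n \<le> 1) \<and> a \<longlonglongrightarrow> 0 \<and> \<not> summable (\<lambda>n. a n * c n)"
proof -
  define d where "d k = (if k = 0 then 1 + c 0 else c k)" for k
  define S where "S n = (\<Sum>k\<le>n. d k)" for n
  have Seq: "S n = 1 + (\<Sum>k\<le>n. c k)" for n unfolding S_def d_def by (rule partial_shift)
  have S1: "S n \<ge> 1" for n using Seq[of n] c0 by (simp add: sum_nonneg)
  have Smono: "S m \<le> S n" if "m \<le> n" for m n
    unfolding Seq using that c0 by (simp add: sum_mono2)
  have d0: "d n \<ge> 0" for n using c0 by (simp add: d_def add_nonneg_nonneg)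
  have unb: "\<exists>n. S n > M" for M
    using unbounded_partial[OF c0 ns, of "M - 1"] Seq by (metis add.commute diff_less_eq)
  have nsd: "\<not> summable (\<lambda>n. d n / S n)"
    using AD_div[of d] d0 unb c0[of 0] by (simp add: S_def d_def add_pos_nonneg)
  define a where "a n = 1 / S n" for n
  show ?thesis
  proof (intro exI[of _ a] conjI allI)
    fix n show "0 \<le> a n" "a n \<le> 1" using S1[of n] by (auto simp: a_def)
  next
    show "a \<longlonglongrightarrow> 0"
    proof (rule LIMSEQ_I)
      fix e :: real assume e: "e > 0"
      obtain n0 where n0: "S n0 > 1 / e" using unb by blast
      show "\<exists>no. \<forall>n\<ge>no. norm (a n - 0) < e"
      proof (intro exI allI impI)
        fix n assume "n0 \<le> n"
        then have "S n > 1 / e" using Smono n0 by (meson less_le_trans)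
        then show "norm (a n - 0) < e" using e S1[of n] by (simp add: a_def field_simps)
      qed
    qed
  next
    show "\<not> summable (\<lambda>n. a n * c n)"
      by (rule shift_nonsummable[OF _ nsd, where k = 1]) (simp add: a_def d_def)
  qed
qed

lemma S2:
  fixes c :: "nat \<Rightarrow> real" and r q :: real
  assumes pq: "r > 1" "q > 1" "1 / r + 1 / q = 1"
    and c0: "\<And>n. c n \<ge> 0" and ns: "\<not> summable (\<lambda>n. c n powr q)"
  shows "\<exists>a. (\<forall>n. 0 \<le> a n) \<and> summable (\<lambda>n. a n powr r) \<and> (\<Sum>n. a n powr r) \<le> 1
              \<and> a \<longlonglongrightarrow> 0 \<and> \<not> summable (\<lambda>n. a n * c n)"
proof -
  have qr: "(q - 1) * r = q"
  proof -
    have "r * q * (1 / r + 1 / q) = r * q" using pq by simp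
    then have "q + r = r * q" using pq by (simp add: field_simps)
    then show ?thesis by (simp add: algebra_simps)
  qed
  define e where "e n = c n powr q" for n
  have e0: "e n \<ge> 0" for n by (simp add: e_def)
  define d where "d k = (if k = 0 then 1 + e 0 else e k)" for k
  define S where "S n = (\<Sum>k\<le>n. d k)" for n
  have Sdef: "S n = (\<Sum>k\<le>n. d k)" for n by (simp add: S_def)
  have Seq: "S n = 1 + (\<Sum>k\<le>n. e k)" for n unfolding S_def d_def by (rule partial_shift)
  have S1: "S n \<ge> 1" for n using Seq[of n] e0 by (simp add: sum_nonneg)
  have d0: "d n \<ge> 0" for n using e0 by (simp add: d_def add_nonneg_nonneg)
  have dpos: "d 0 > 0" using e0[of 0] by (simp add: d_def)
  have "(\<lambda>n. c n powr q) = e" by (rule ext) (simp add: e_def)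
  then have ns': "\<not> summable e" using ns by simp
  have unb: "\<exists>n. (\<Sum>k\<le>n. d k) > M" for M
    using unbounded_partial[OF e0 ns', of "M - 1"] Seq by (metis add.commute diff_less_eq S_def)
  have nsd: "\<not> summable (\<lambda>n. d n / S n)"
    using AD_div[of d] d0 dpos unb by (simp add: S_def)
  have sdr: "summable (\<lambda>n. d n / S n powr r)"
    using AD_conv[of d r] d0 dpos pq(1) by (simp add: S_def)
  define b where "b n = c n powr (q - 1) / S n" for n
  have b0: "b n \<ge> 0" for n using S1[of n] by (simp add: b_def)
  have br: "b n powr r = e n / S n powr r" for n
    using S1[of n] c0[of n] pq by (simp add: b_def e_def powr_divide powr_powr qr)
  have sbr: "summable (\<lambda>n. b n powr r)"
  proof (rule summable_comparison_test'[OF sdr])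
    fix n
    have "e n \<le> d n" by (simp add: d_def)
    then show "norm (b n powr r) \<le> d n / S n powr r"
      using S1[of n] e0[of n] by (simp add: br divide_right_mono)
  qed
  define A where "A = (\<Sum>n. b n powr r)"
  have A0: "A \<ge> 0" unfolding A_def by (intro suminf_nonneg sbr) auto
  define l where "l = (A + 1) powr (1 / r)"
  have l0: "l > 0" using A0 by (simp add: l_def)
  have lr: "l powr r = A + 1" using A0 pq by (simp add: l_def powr_powr)
  define a where "a n = b n / l" for n
  have a0: "a n \<ge> 0" for n using b0[of n] l0 by (simp add: a_def)
  have ar: "a n powr r = b n powr r / (A + 1)" for n
    using b0[of n] l0 lr by (simp add: a_def powr_divide)
  have sar: "summable (\<lambda>n. a n powr r)" unfolding ar by (rule summable_divide[OF sbr])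
  have "(\<Sum>n. a n powr r) = A / (A + 1)" unfolding ar A_def by (rule suminf_divide[OF sbr])
  also have "\<dots> \<le> 1" using A0 by simp
  finally have sa1: "(\<Sum>n. a n powr r) \<le> 1" .
  have alim: "a \<longlonglongrightarrow> 0"
  proof -
    have "(\<lambda>n. a n powr r) \<longlonglongrightarrow> 0" by (rule summable_LIMSEQ_zero[OF sar])
    then have "(\<lambda>n. (a n powr r) powr (1 / r)) \<longlonglongrightarrow> 0"
      by (rule tendsto_zero_powrI[OF _ tendsto_const]) (use pq in auto)
    moreover have "(a n powr r) powr (1 / r) = a n" for n using a0[of n] pq by (simp add: powr_powr)
    ultimately show ?thesis by simp
  qed
  have bc: "b n * c n = e n / S n" for n
  proof (cases "c n = 0")
    case True then show ?thesis using pq by (simp add: b_def e_def)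
  next
    case False
    then have "c n > 0" using c0[of n] by simp
    then have "c n powr (q - 1) * c n = c n powr q"
      by (metis add_diff_cancel_left' diff_add_cancel powr_add powr_one_gt_zero_iff less_imp_le)
    then show ?thesis by (simp add: b_def e_def)
  qed
  have nsac: "\<not> summable (\<lambda>n. a n * c n)"
  proof (rule shift_nonsummable[OF _ nsd, where k = "1 / l"])
    fix n
    show "d (Suc n) / S (Suc n) = a (Suc n) * c (Suc n) / (1 / l)"
      using l0 bc[of "Suc n"] by (simp add: a_def d_def field_simps)
  qed
  show ?thesis using a0 sar sa1 alim nsac by blast
qed

lemma S1:
  fixes c :: "nat \<Rightarrow> real"
  assumes c0: "\<And>n. c n \<ge> 0" and nb: "\<not> bdd_above (range c)"
  shows "\<exists>a. (\<forall>n. 0 \<le> a n) \<and> summable a \<and> (\<Sum>n. a n) \<le> 1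
              \<and> a \<longlonglongrightarrow> 0 \<and> \<not> summable (\<lambda>n. a n * c n)"
proof -
  define M where "M = runmax c"
  have M1: "M n \<ge> 1" for n by (simp add: M_def runmax_ge1)
  have Mc: "c n \<le> M n" for n by (simp add: M_def runmax_ge)
  have Mmono: "M m \<le> M n" if "m \<le> n" for m n using that by (simp add: M_def runmax_mono)
  define d where "d k = (if k = 0 then M 0 else M k - M (k - 1))" for k
  have Sd: "(\<Sum>k\<le>n. d k) = M n" for n by (induction n) (auto simp: d_def)
  have d0: "d n \<ge> 0" for n using Mmono[of "n - 1" n] M1[of 0] by (auto simp: d_def)
  have dpos: "d 0 > 0" using M1[of 0] by (simp add: d_def)
  have unb: "\<exists>n. (\<Sum>k\<le>n. d k) > B" for B
  proof -
    obtain n where "c n > B" using nb by (meson bdd_aboveI2 not_le)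
    then show ?thesis using Mc[of n] Sd[of n] by (metis less_le_trans)
  qed
  have nsd: "\<not> summable (\<lambda>n. d n / M n)" using AD_div[of d] d0 dpos unb by (simp add: Sd)
  have sb: "summable (\<lambda>n. d n / M n powr 2)" using AD_conv[of d 2] d0 dpos by (simp add: Sd)
  define b where "b n = d n / M n powr 2" for n
  have b0: "b n \<ge> 0" for n using d0[of n] by (simp add: b_def)
  define A where "A = (\<Sum>n. b n)"
  have A0: "A \<ge> 0" unfolding A_def b_def by (intro suminf_nonneg sb) (use b0 in \<open>auto simp: b_def\<close>)
  define a where "a n = b n / (A + 1)" for n
  have a0: "a n \<ge> 0" for n using b0[of n] A0 by (simp add: a_def)
  have sa: "summable a" unfolding a_def by (rule summable_divide) (use sb in \<open>simp add: b_def\<close>)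
  have "(\<Sum>n. a n) = A / (A + 1)" unfolding a_def A_def
    by (rule suminf_divide) (use sb in \<open>simp add: b_def\<close>)
  also have "\<dots> \<le> 1" using A0 by simp
  finally have sa1: "(\<Sum>n. a n) \<le> 1" .
  have alim: "a \<longlonglongrightarrow> 0" by (rule summable_LIMSEQ_zero[OF sa])
  have bc: "b (Suc n) * c (Suc n) = d (Suc n) / M (Suc n)" for n
  proof (cases "M (Suc n) = M n")
    case True then show ?thesis by (simp add: b_def d_def)
  next
    case False
    then have "M (Suc n) = c (Suc n)" by (simp add: M_def max_def split: if_splits)
    moreover have "M (Suc n) powr 2 = M (Suc n) * M (Suc n)"
      using M1[of "Suc n"] by (simp add: powr_numeral power2_eq_square)
    ultimately show ?thesis using M1[of "Suc n"] by (simp add: b_def)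
  qed
  have nsac: "\<not> summable (\<lambda>n. a n * c n)"
  proof (rule shift_nonsummable[OF _ nsd, where k = "1 / (A + 1)"])
    fix n
    have "a (Suc n) * c (Suc n) / (1 / (A + 1)) = b (Suc n) * c (Suc n)"
      using A0 by (simp add: a_def)
    then show "d (Suc n) / M (Suc n) = a (Suc n) * c (Suc n) / (1 / (A + 1))"
      using bc[of n] by simp
  qed
  show ?thesis using a0 sa sa1 alim nsac by blast
qed



lemma onorm_attain:
  assumes bl: "bounded_linear f"
  shows "\<exists>u. norm u \<le> 1 \<and> onorm f \<le> 2 * norm (f u)"
proof (rule ccontr)
  assume neg: "\<not> ?thesis"
  have on0: "onorm f \<ge> 0" by (rule onorm_pos_le[OF bl])
  have "\<And>x. norm (f x) \<le> (onorm f / 2) * norm x"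
  proof -
    fix x
    show "norm (f x) \<le> (onorm f / 2) * norm x"
    proof (cases "x = 0")
      case True then show ?thesis using linear_simps(3)[OF bl] by simp
    next
      case False
      define u where "u = (1 / norm x) *\<^sub>R x"
      have "norm u \<le> 1" using False by (simp add: u_def)
      then have "2 * norm (f u) < onorm f" using neg by force
      moreover have "f u = (1 / norm x) *\<^sub>R f x" by (simp add: u_def linear_simps[OF bl])
      ultimately have "2 * (norm (f x) / norm x) < onorm f" using False by simp
      then show ?thesis using False by (simp add: field_simps)
    qed
  qed
  then have "onorm f \<le> onorm f / 2" using on0 by (intro onorm_bound) auto
  then have "onorm f = 0" using on0 by simp
  then show False using neg by (metis norm_ge_zero norm_zero mult_nonneg_nonneg zero_le_numeral order_refl le_numeral_extra(1) norm_zero)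
qed

lemma dual_sum:
  fixes \<kappa> :: "nat \<Rightarrow> 'z::real_normed_vector \<Rightarrow> 'y::real_normed_vector"
  assumes cr: "conv_rep Zs H \<kappa>" and low: "c0_seq \<inter> lp_ball p \<subseteq> Zs"
    and pc: "p = \<infinity> \<or> (\<exists>r>0. p = ereal r)"
    and a0: "\<And>n. 0 \<le> a n" and ac: "(a :: nat \<Rightarrow> real) \<in> c0_seq" and ab: "a \<in> lp_ball p"
  shows "summable (\<lambda>n. a n * onorm (\<kappa> n))"
proof -
  have bl: "bounded_linear (\<kappa> n)" for n by (rule conv_rep_bl[OF cr])
  have "\<forall>n. \<exists>u. norm u \<le> 1 \<and> onorm (\<kappa> n) \<le> 2 * norm (\<kappa> n u)" using onorm_attain[OF bl] by blast
  then obtain u where u1: "\<And>n. norm (u n) \<le> 1" and uo: "\<And>n. onorm (\<kappa> n) \<le> 2 * norm (\<kappa> n (u n))"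
    by (auto dest!: choice)
  define z where "z n = a n *\<^sub>R u n" for n
  have za: "norm (z n) \<le> a n" for n
    using u1[of n] a0[of n] by (simp add: z_def mult_left_le)
  have zc: "z \<in> c0_seq" by (rule c0_mono[OF ac]) (use za a0 in auto)
  have zb: "z \<in> lp_ball p"
    using pc
  proof
    assume pinf: "p = \<infinity>"
    have "norm (z n) \<le> 1" for n using za[of n] lp_ball_inf_D[of a n] ab pinf a0[of n] by simp
    then show ?thesis using pinf lp_ball_inf_I by blast
  next
    assume "\<exists>r>0. p = ereal r"
    then obtain r where r: "r > 0" "p = ereal r" by blast
    have "summable (\<lambda>n. norm (a n) powr r)" "(\<Sum>n. norm (a n) powr r) \<le> 1"
      using lp_ball_fin_D[of a r] ab r by auto
    then show ?thesis using r lp_ball_fin_I[of r "\<lambda>n. norm (a n)" z] za a0 by auto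
  qed
  have zZ: "z \<in> Zs" using zc zb low by blast
  have s: "summable (\<lambda>n. norm (\<kappa> n (z n)))" by (rule conv_rep_abs[OF cr zZ])
  show ?thesis
  proof (rule summable_comparison_test'[OF summable_mult[OF s, of 2]])
    fix n
    have "norm (\<kappa> n (z n)) = a n * norm (\<kappa> n (u n))"
      using a0[of n] by (simp add: z_def linear_simps[OF bl])
    then show "norm (a n * onorm (\<kappa> n)) \<le> 2 * norm (\<kappa> n (z n))"
      using uo[of n] a0[of n] onorm_pos_le[OF bl, of n]
      by (simp add: mult_left_mono mult.left_commute)
  qed
qed



lemma weight_summable:
  fixes a :: "nat \<Rightarrow> real"
  assumes a0: "\<And>n. 0 \<le> a n" and sa: "summable a" and t: "t > 0"
  shows "\<exists>w. weighting_seq w \<and> summable (\<lambda>n. a n * w n powr (- t))"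
proof -
  define T where "T n = (\<Sum>k. a (k + n))" for n
  have Teq: "T n = suminf a - (\<Sum>k<n. a k)" for n
    using suminf_split_initial_segment[OF sa, of n] by (simp add: T_def)
  have T0: "T n \<ge> 0" for n
    unfolding T_def by (intro suminf_nonneg summable_ignore_initial_segment[OF sa]) (use a0 in auto)
  define R where "R n = T n + (1/2) ^ n" for n
  have Rpos: "R n > 0" for n using T0[of n] by (simp add: R_def add_nonneg_pos)
  have Rdiff: "R n - R (Suc n) = a n + (1/2) ^ Suc n" for n
    by (simp add: R_def Teq)
  have Rdec: "R (Suc n) \<le> R n" for n
  proof -
    have "0 \<le> (1/2::real) ^ Suc n" by simp
    then show ?thesis using Rdiff[of n] a0[of n] by linarith
  qed
  have decR: "decseq R" by (rule decseq_SucI[of R, OF Rdec])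
  have RR0: "R n \<le> R 0" for n using decR by (simp add: decseq_def)
  have Rlim: "R \<longlonglongrightarrow> 0"
  proof -
    have "(\<lambda>n. suminf a - (\<Sum>k<n. a k)) \<longlonglongrightarrow> suminf a - suminf a"
      by (intro tendsto_diff tendsto_const summable_LIMSEQ[OF sa])
    then have "T \<longlonglongrightarrow> 0" by (simp add: Teq[abs_def])
    moreover have "(\<lambda>n. (1/2::real) ^ n) \<longlonglongrightarrow> 0" by (rule LIMSEQ_power_zero) simp
    ultimately have "(\<lambda>n. T n + (1/2) ^ n) \<longlonglongrightarrow> 0 + 0" by (rule tendsto_add)
    then show ?thesis by (simp add: R_def[abs_def])
  qed
  define w where "w n = (R n / R 0) powr (1 / (2 * t))" for n
  have ws: "weighting_seq w" unfolding weighting_seq_def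
  proof (intro conjI allI)
    fix n
    show "0 < w n" using Rpos[of n] Rpos[of 0] by (simp add: w_def)
    have "R n / R 0 \<le> 1" using RR0[of n] Rpos[of 0] by simp
    then have "(R n / R 0) powr (1 / (2 * t)) \<le> 1 powr (1 / (2 * t))"
      using Rpos[of n] Rpos[of 0] t by (intro powr_mono2) auto
    then show "w n \<le> 1" by (simp add: w_def)
  next
    show "decseq w" unfolding decseq_def
    proof (intro allI impI)
      fix m n :: nat assume "m \<le> n"
      then have "R n \<le> R m" using decR by (simp add: decseq_def)
      then have "R n / R 0 \<le> R m / R 0" using Rpos[of 0] by (simp add: divide_right_mono)
      then show "w n \<le> w m" unfolding w_def
        using Rpos[of n] Rpos[of 0] t by (intro powr_mono2) auto
    qed
  next
    have "(\<lambda>n. R n / R 0) \<longlonglongrightarrow> 0 / R 0" by (intro tendsto_divide Rlim tendsto_const) (use Rpos[of 0] in auto)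
    then have lim0: "(\<lambda>n. R n / R 0) \<longlonglongrightarrow> 0" by simp
    have "(\<lambda>n. (R n / R 0) powr (1 / (2 * t))) \<longlonglongrightarrow> 0"
    proof (rule tendsto_zero_powrI[OF lim0 tendsto_const])
      show "\<forall>\<^sub>F n in sequentially. 0 \<le> R n / R 0" using Rpos by (intro always_eventually) (simp add: less_imp_le)
    qed (use t in auto)
    then show "w \<longlonglongrightarrow> 0" by (simp add: w_def[abs_def])
  qed
  have wp: "w n powr (- t) = sqrt (R 0) / sqrt (R n)" for n
  proof -
    have "w n powr (- t) = (R n / R 0) powr (- (1/2))"
      using t by (simp add: w_def powr_powr)
    also have "\<dots> = inverse ((R n / R 0) powr (1/2))" by (rule powr_minus)
    also have "(R n / R 0) powr (1/2) = sqrt (R n / R 0)"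
      using Rpos[of n] Rpos[of 0] by (simp add: powr_half_sqrt)
    finally show ?thesis by (simp add: real_sqrt_divide)
  qed
  define s where "s n = sqrt (R n)" for n
  have spos: "s n > 0" for n using Rpos[of n] by (simp add: s_def)
  have sdec: "s (Suc n) \<le> s n" for n using Rdec[of n] by (simp add: s_def)
  have key: "a n / s n \<le> 2 * (s n - s (Suc n))" for n
  proof -
    have sq: "s n * s n = R n" "s (Suc n) * s (Suc n) = R (Suc n)"
      using Rpos[of n] Rpos[of "Suc n"] by (simp_all add: s_def)
    have "a n \<le> R n - R (Suc n)" using Rdiff[of n] by simp
    also have "\<dots> = (s n - s (Suc n)) * (s n + s (Suc n))" using sq by (simp add: algebra_simps)
    also have "\<dots> \<le> (s n - s (Suc n)) * (2 * s n)"
      using sdec[of n] by (intro mult_left_mono) auto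
    finally have "a n \<le> (s n - s (Suc n)) * (2 * s n)" .
    then show ?thesis using spos[of n] by (simp add: field_simps)
  qed
  have sas: "summable (\<lambda>n. a n / s n)"
  proof (rule summableI_nonneg_bounded)
    show "0 \<le> a n / s n" for n using a0[of n] spos[of n] by simp
    fix N
    have "(\<Sum>n<N. a n / s n) \<le> (\<Sum>n<N. 2 * (s n - s (Suc n)))" by (intro sum_mono key)
    also have "\<dots> = 2 * (\<Sum>n<N. s n - s (Suc n))" by (rule sum_distrib_left[symmetric])
    also have "\<dots> = 2 * (s 0 - s N)" by (simp only: sum_lessThan_telescope')
    also have "\<dots> \<le> 2 * s 0" using spos[of N] by simp
    finally show "(\<Sum>n<N. a n / s n) \<le> 2 * s 0" .
  qed
  have "summable (\<lambda>n. sqrt (R 0) * (a n / s n))" by (rule summable_mult[OF sas])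
  moreover have "a n * w n powr (- t) = sqrt (R 0) * (a n / s n)" for n
    by (simp add: wp s_def)
  ultimately show ?thesis using ws by (intro exI[of _ w]) simp
qed

lemma weight_one:
  fixes c :: "nat \<Rightarrow> real"
  assumes c0: "\<And>n. 0 \<le> c n" and cl: "c \<longlonglongrightarrow> 0"
  shows "\<exists>w K. weighting_seq w \<and> K \<ge> 0 \<and> (\<forall>n. c n \<le> K * w n)"
proof -
  obtain B where B: "\<And>n. c n \<le> B"
    using convergent_imp_Bseq[OF convergentI[OF cl]] unfolding Bseq_def by (metis real_norm_def abs_le_D1)
  define m where "m n = (SUP k. c (k + n))" for n
  have bdd: "bdd_above (range (\<lambda>k. c (k + n)))" for n using B by (intro bdd_aboveI2) auto
  have cm: "c n \<le> m n" for n
    using cSUP_upper[OF UNIV_I bdd[of n], of 0] by (simp add: m_def)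
  have m0: "0 \<le> m n" for n using c0[of n] cm[of n] by simp
  have mdec: "m (Suc n) \<le> m n" for n
    unfolding m_def
  proof (rule cSUP_least)
    fix k
    show "c (k + Suc n) \<le> (SUP k. c (k + n))"
      using cSUP_upper[OF UNIV_I bdd[of n], of "Suc k"] by simp
  qed simp
  have decm: "decseq m" by (rule decseq_SucI[of m, OF mdec])
  have mm0: "m n \<le> m 0" for n using decm by (simp add: decseq_def)
  have mlim: "m \<longlonglongrightarrow> 0"
  proof (rule LIMSEQ_I)
    fix e :: real assume e: "e > 0"
    obtain N where N: "\<And>n. n \<ge> N \<Longrightarrow> norm (c n - 0) < e / 2"
      using LIMSEQ_D[OF cl, of "e/2"] e by auto
    show "\<exists>no. \<forall>n\<ge>no. norm (m n - 0) < e"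
    proof (intro exI allI impI)
      fix n assume n: "N \<le> n"
      have "m n \<le> e / 2" unfolding m_def
      proof (rule cSUP_least)
        fix k show "c (k + n) \<le> e / 2" using N[of "k + n"] n c0[of "k + n"] by simp
      qed simp
      then show "norm (m n - 0) < e" using m0[of n] e by simp
    qed
  qed
  define w where "w n = (m n + 1 / (real n + 1)) / (m 0 + 1)" for n
  have ws: "weighting_seq w" unfolding weighting_seq_def
  proof (intro conjI allI)
    fix n
    show "0 < w n" using m0[of n] m0[of 0] by (simp add: w_def add_nonneg_pos)
    have "1 / (real n + 1) \<le> 1" by simp
    then have "m n + 1 / (real n + 1) \<le> m 0 + 1" using mm0[of n] by linarith
    then show "w n \<le> 1" using m0[of 0] by (simp add: w_def)
  next
    show "decseq w" unfolding decseq_def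
    proof (intro allI impI)
      fix k n :: nat assume kn: "k \<le> n"
      have "m n \<le> m k" using decm kn by (simp add: decseq_def)
      moreover have "1 / (real n + 1) \<le> 1 / (real k + 1)" using kn by (simp add: frac_le)
      ultimately show "w n \<le> w k" using m0[of 0] unfolding w_def
        by (intro divide_right_mono add_mono) auto
    qed
  next
    have "(\<lambda>n. 1 / (real n + 1)) \<longlonglongrightarrow> 0"
      using LIMSEQ_inverse_real_of_nat by (simp add: inverse_eq_divide add.commute)
    then have "(\<lambda>n. (m n + 1 / (real n + 1)) / (m 0 + 1)) \<longlonglongrightarrow> (0 + 0) / (m 0 + 1)"
      by (intro tendsto_divide tendsto_add mlim tendsto_const) (use m0[of 0] in auto)
    then show "w \<longlonglongrightarrow> 0" by (simp add: w_def[abs_def])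
  qed
  have "c n \<le> (m 0 + 1) * w n" for n
  proof -
    have "c n \<le> m n + 1 / (real n + 1)" using cm[of n] by (simp add: add_increasing2)
    then show ?thesis using m0[of 0] by (simp add: w_def)
  qed
  then show ?thesis using ws m0[of 0] by (intro exI[of _ w] exI[of _ "m 0 + 1"]) auto
qed



lemma onorm_le_from_ball:
  assumes bl: "bounded_linear f" and e: "e \<ge> 0" and b: "\<And>u. norm u \<le> 1 \<Longrightarrow> norm (f u) \<le> e"
  shows "onorm f \<le> e"
proof (rule onorm_bound[OF e])
  fix x
  show "norm (f x) \<le> e * norm x"
  proof (cases "x = 0")
    case True then show ?thesis using linear_simps(3)[OF bl] by simp
  next
    case False
    define u where "u = (1 / norm x) *\<^sub>R x"
    have "norm u \<le> 1" using False by (simp add: u_def)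
    then have "norm (f u) \<le> e" by (rule b)
    moreover have "f u = (1 / norm x) *\<^sub>R f x" by (simp add: u_def linear_simps[OF bl])
    ultimately have "norm (f x) / norm x \<le> e" using False by simp
    then show ?thesis using False by (simp add: field_simps)
  qed
qed

lemma weighting_bounds: "weighting_seq w \<Longrightarrow> 0 \<le> w n \<and> w n \<le> 1"
  unfolding weighting_seq_def by (meson less_imp_le)

lemma weighting_pos: "weighting_seq w \<Longrightarrow> 0 < w n \<and> w n \<le> 1"
  unfolding weighting_seq_def by blast

lemma lp_norm_eq: "lp_norm p = lp_w_norm p (\<lambda>_. 1)"
  by (rule ext) (simp add: lp_norm_def)

lemma c0_of_tendsto: "(a :: nat \<Rightarrow> real) \<longlonglongrightarrow> 0 \<Longrightarrow> a \<in> c0_seq"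
  unfolding c0_seq_def by (simp add: tendsto_rabs_zero_iff)

context
  fixes Zs :: "(nat \<Rightarrow> 'z::real_normed_vector) set" and H :: "(nat \<Rightarrow> 'z) \<Rightarrow> 'y::real_normed_vector"
    and L :: "(nat \<Rightarrow> 'z) \<Rightarrow> 'y"
  assumes std: "std_assm Zs" and findim: "\<exists>B::'y set. finite B \<and> span B = UNIV"
    and L: "lin_L L" and HL: "\<And>z. z \<in> Zs \<Longrightarrow> H z = L z"
begin

lemma MF_cr: "minimal_FMP Zs H \<Longrightarrow> minimally_continuous Zs H \<Longrightarrow> conv_rep Zs H (\<lambda>n u. L (delta n u))"
  by (rule MF_imp_conv_rep[OF std findim L HL])

lemma part1:
  assumes low: "c0_seq \<inter> lp_ball (ereal 1) \<subseteq> Zs" and up: "Zs \<subseteq> lp_space (ereal 1)"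
  shows "(p_weighted_FMP (ereal 1) Zs H \<longleftrightarrow> (\<exists>\<kappa>. conv_rep Zs H \<kappa> \<and> (\<lambda>n. onorm (\<kappa> n)) \<longlonglongrightarrow> 0))
     \<and> (p_continuous (ereal 1) Zs H \<longleftrightarrow> (\<exists>\<kappa>. conv_rep Zs H \<kappa> \<and> bdd_above (range (\<lambda>n. onorm (\<kappa> n)))))
     \<and> (p_continuous (ereal 1) Zs H \<longleftrightarrow> minimal_FMP Zs H \<and> minimally_continuous Zs H)"
proof -
  define \<kappa>0 where "\<kappa>0 = (\<lambda>n u. L (delta n u))"
  have N1: "bdd_above (range (\<lambda>n. onorm (\<kappa>0 n)))"
    if mf: "minimal_FMP Zs H" "minimally_continuous Zs H"
  proof (rule ccontr)
    assume nb: "\<not> ?thesis"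
    have cr: "conv_rep Zs H \<kappa>0" unfolding \<kappa>0_def by (rule MF_cr[OF mf])
    have c0: "0 \<le> onorm (\<kappa>0 n)" for n by (rule onorm_pos_le[OF conv_rep_bl[OF cr]])
    obtain a where a0: "\<And>n. 0 \<le> a n" and sa: "summable a" and sa1: "(\<Sum>n. a n) \<le> 1"
      and al: "a \<longlonglongrightarrow> 0" and ns: "\<not> summable (\<lambda>n. a n * onorm (\<kappa>0 n))"
      using S1[of "\<lambda>n. onorm (\<kappa>0 n)", OF c0 nb] by blast
    have ab: "a \<in> lp_ball (ereal 1)"
      by (rule lp_ball_fin_I[of 1 a]) (use a0 sa sa1 in auto)
    have "summable (\<lambda>n. a n * onorm (\<kappa>0 n))"
      by (rule dual_sum[OF cr low _ a0 c0_of_tendsto[OF al] ab]) auto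
    with ns show False by simp
  qed
  have W_MF: "minimal_FMP Zs H \<and> minimally_continuous Zs H"
    if ws: "weighting_seq w" and cw: "cont_wrt (lp_w_norm (ereal 1) w) Zs H" for w
  proof (rule WMF[OF cw _ _ std])
    show "(\<lambda>T. lp_w_norm (ereal 1) w (\<lambda>n. trunc T z n - z n)) \<longlonglongrightarrow> 0" if "z \<in> Zs" for z
      using that up by (intro TR_fin) (auto simp: weighting_bounds[OF ws])
    show "lp_w_norm (ereal 1) w (\<lambda>n. delta t u n - delta t v n) \<le> norm (u - v)" for t u v
      by (rule DL_fin) (auto simp: weighting_bounds[OF ws])
  qed
  have C_MF: "minimal_FMP Zs H \<and> minimally_continuous Zs H" if "p_continuous (ereal 1) Zs H"
  proof -
    have "cont_wrt (lp_w_norm (ereal 1) (\<lambda>_. 1)) Zs H"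
      using that by (simp add: p_continuous_def lp_norm_eq)
    moreover have "weighting_seq (\<lambda>_. 1) \<or> True" by simp
    ultimately show ?thesis
    proof -
      assume cw: "cont_wrt (lp_w_norm (ereal 1) (\<lambda>_. 1)) Zs H"
      show ?thesis
      proof (rule WMF[OF cw _ _ std])
        show "(\<lambda>T. lp_w_norm (ereal 1) (\<lambda>_. 1) (\<lambda>n. trunc T z n - z n)) \<longlonglongrightarrow> 0" if "z \<in> Zs" for z
          using that up by (intro TR_fin) auto
        show "lp_w_norm (ereal 1) (\<lambda>_. 1) (\<lambda>n. delta t u n - delta t v n) \<le> norm (u - v)" for t u v
          by (rule DL_fin) auto
      qed
    qed
  qed
  have bdd_C: "p_continuous (ereal 1) Zs H" if cr: "conv_rep Zs H \<kappa>" and bd: "bdd_above (range (\<lambda>n. onorm (\<kappa> n)))" for \<kappa>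
  proof -
    obtain B where B: "\<And>n. onorm (\<kappa> n) \<le> B" using bd by (auto simp: bdd_above_def)
    have "cont_wrt (lp_w_norm (ereal 1) (\<lambda>_. 1)) Zs H"
    proof (rule Cont_one[OF cr up, of _ "max 0 B"])
      show "onorm (\<kappa> n) \<le> max 0 B * 1" for n using B[of n] by simp
    qed auto
    then show ?thesis using up by (simp add: p_continuous_def lp_norm_eq)
  qed
  have MF_C: "p_continuous (ereal 1) Zs H" if "minimal_FMP Zs H" "minimally_continuous Zs H"
    using bdd_C[OF MF_cr[OF that] N1[OF that, unfolded \<kappa>0_def]] .
  have W_k: "\<exists>\<kappa>. conv_rep Zs H \<kappa> \<and> (\<lambda>n. onorm (\<kappa> n)) \<longlonglongrightarrow> 0" if W: "p_weighted_FMP (ereal 1) Zs H"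
  proof -
    obtain w where ws: "weighting_seq w" and cw: "cont_wrt (lp_w_norm (ereal 1) w) Zs H"
      using W by (auto simp: p_weighted_FMP_def)
    have mf: "minimal_FMP Zs H" "minimally_continuous Zs H" using W_MF[OF ws cw] by auto
    have cr: "conv_rep Zs H \<kappa>0" unfolding \<kappa>0_def by (rule MF_cr[OF mf])
    have z0: "(\<lambda>n. 0) \<in> Zs" by (rule std_zero[OF std])
    have H0: "H (\<lambda>n. 0) = 0" using HL[OF z0] lin_L_zero[OF L] by simp
    have "(\<lambda>n. onorm (\<kappa>0 n)) \<longlonglongrightarrow> 0"
    proof (rule LIMSEQ_I)
      fix e :: real assume e: "e > 0"
      have cz: "\<forall>\<epsilon>>0. \<exists>d>0. \<forall>z'\<in>Zs. lp_w_norm (ereal 1) w (\<lambda>n. z' n - 0) < d \<longrightarrow> dist (H z') (H (\<lambda>n. 0)) < \<epsilon>"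
        using bspec[OF cw[unfolded cont_wrt_def] z0] by simp
      obtain d where d0: "d > 0" and d: "\<And>z'. z' \<in> Zs \<Longrightarrow> lp_w_norm (ereal 1) w (\<lambda>n. z' n - 0) < d \<Longrightarrow> dist (H z') (H (\<lambda>n. 0)) < e / 2"
        using cz[rule_format, OF half_gt_zero[OF e]] by blast
      have wl: "w \<longlonglongrightarrow> 0" using ws by (simp add: weighting_seq_def)
      obtain N where N: "\<And>n. n \<ge> N \<Longrightarrow> norm (w n - 0) < d" using LIMSEQ_D[OF wl d0] by blast
      show "\<exists>no. \<forall>n\<ge>no. norm (onorm (\<kappa>0 n) - 0) < e"
      proof (intro exI allI impI)
        fix n assume n: "N \<le> n"
        have "onorm (\<kappa>0 n) \<le> e / 2"
        proof (rule onorm_le_from_ball[OF conv_rep_bl[OF cr]])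
          fix u :: 'z assume u: "norm u \<le> 1"
          have wn: "0 \<le> w n" "w n < d" using N[OF n] weighting_bounds[OF ws, of n] by auto
          have "lp_w_norm (ereal 1) w (\<lambda>k. delta n u k - 0) = w n * norm u"
            using lpw_delta_fin[of 1 w n u] wn by simp
          also have "\<dots> \<le> w n" using u wn by (simp add: mult_left_le)
          finally have "lp_w_norm (ereal 1) w (\<lambda>k. delta n u k - 0) < d" using wn by linarith
          then have "dist (H (delta n u)) (H (\<lambda>n. 0)) < e / 2"
            using d std_delta[OF std u] by blast
          then show "norm (\<kappa>0 n u) \<le> e / 2"
            using H0 HL[OF std_delta[OF std u]] by (simp add: \<kappa>0_def dist_norm)
        qed (use e in simp)
        then show "norm (onorm (\<kappa>0 n) - 0) < e"
          using e onorm_pos_le[OF conv_rep_bl[OF cr], of n] by simp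
      qed
    qed
    then show ?thesis using cr by blast
  qed
  have k_W: "p_weighted_FMP (ereal 1) Zs H" if cr: "conv_rep Zs H \<kappa>" and kl: "(\<lambda>n. onorm (\<kappa> n)) \<longlonglongrightarrow> 0" for \<kappa>
  proof -
    obtain w K where ws: "weighting_seq w" and K0: "K \<ge> 0" and kw: "\<forall>n. onorm (\<kappa> n) \<le> K * w n"
      using weight_one[OF onorm_pos_le[OF conv_rep_bl[OF cr]] kl] by blast
    have "cont_wrt (lp_w_norm (ereal 1) w) Zs H"
      by (rule Cont_one[OF cr up _ K0]) (use kw weighting_bounds[OF ws] in auto)
    then show ?thesis using ws up by (auto simp: p_weighted_FMP_def)
  qed
  have i1: "p_weighted_FMP (ereal 1) Zs H \<longleftrightarrow> (\<exists>\<kappa>. conv_rep Zs H \<kappa> \<and> (\<lambda>n. onorm (\<kappa> n)) \<longlonglongrightarrow> 0)"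
    using W_k k_W by blast
  have i2: "p_continuous (ereal 1) Zs H \<longleftrightarrow> (\<exists>\<kappa>. conv_rep Zs H \<kappa> \<and> bdd_above (range (\<lambda>n. onorm (\<kappa> n))))"
  proof
    assume c: "p_continuous (ereal 1) Zs H"
    have mf: "minimal_FMP Zs H" "minimally_continuous Zs H" using C_MF[OF c] by auto
    show "\<exists>\<kappa>. conv_rep Zs H \<kappa> \<and> bdd_above (range (\<lambda>n. onorm (\<kappa> n)))"
      using MF_cr[OF mf] N1[OF mf] unfolding \<kappa>0_def by blast
  qed (use bdd_C in blast)
  have i3: "p_continuous (ereal 1) Zs H \<longleftrightarrow> minimal_FMP Zs H \<and> minimally_continuous Zs H"
    using C_MF MF_C by blast
  show ?thesis using i1 i2 i3 by blast
qed

end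



context
  fixes Zs :: "(nat \<Rightarrow> 'z::real_normed_vector) set" and H :: "(nat \<Rightarrow> 'z) \<Rightarrow> 'y::real_normed_vector"
    and L :: "(nat \<Rightarrow> 'z) \<Rightarrow> 'y"
  assumes std: "std_assm Zs" and findim: "\<exists>B::'y set. finite B \<and> span B = UNIV"
    and L: "lin_L L" and HL: "\<And>z. z \<in> Zs \<Longrightarrow> H z = L z"
begin

lemma MF_cr': "minimal_FMP Zs H \<Longrightarrow> minimally_continuous Zs H \<Longrightarrow> conv_rep Zs H (\<lambda>n u. L (delta n u))"
  by (rule MF_imp_conv_rep[OF std findim L HL])

lemma part2:
  assumes r: "r > 1" and q: "q > 1" and rq: "1 / r + 1 / q = 1"
    and low: "c0_seq \<inter> lp_ball (ereal r) \<subseteq> Zs" and up: "Zs \<subseteq> lp_space (ereal r)"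
  shows "(p_weighted_FMP (ereal r) Zs H \<longleftrightarrow> p_continuous (ereal r) Zs H)
        \<and> (p_continuous (ereal r) Zs H \<longleftrightarrow> (\<exists>\<kappa>. conv_rep Zs H \<kappa> \<and> summable (\<lambda>n. onorm (\<kappa> n) powr q)))
        \<and> (p_continuous (ereal r) Zs H \<longleftrightarrow> minimal_FMP Zs H \<and> minimally_continuous Zs H)"
proof -
  define \<kappa>0 where "\<kappa>0 = (\<lambda>n u. L (delta n u))"
  have r0: "r > 0" using r by simp
  have N2: "summable (\<lambda>n. onorm (\<kappa>0 n) powr q)"
    if mf: "minimal_FMP Zs H" "minimally_continuous Zs H"
  proof (rule ccontr)
    assume ns: "\<not> ?thesis"
    have cr: "conv_rep Zs H \<kappa>0" unfolding \<kappa>0_def by (rule MF_cr'[OF mf])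
    have c0: "0 \<le> onorm (\<kappa>0 n)" for n by (rule onorm_pos_le[OF conv_rep_bl[OF cr]])
    obtain a where a0: "\<And>n. 0 \<le> a n" and sa: "summable (\<lambda>n. a n powr r)" and sa1: "(\<Sum>n. a n powr r) \<le> 1"
      and al: "a \<longlonglongrightarrow> 0" and nsa: "\<not> summable (\<lambda>n. a n * onorm (\<kappa>0 n))"
      using S2[OF r q rq, of "\<lambda>n. onorm (\<kappa>0 n)", OF c0 ns] by blast
    have ab: "a \<in> lp_ball (ereal r)"
      by (rule lp_ball_fin_I[OF r0 sa sa1 a0]) (use a0 in simp)
    have "summable (\<lambda>n. a n * onorm (\<kappa>0 n))"
      by (rule dual_sum[OF cr low _ a0 c0_of_tendsto[OF al] ab]) (use r0 in auto)
    with nsa show False by simp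
  qed
  have W_MF: "minimal_FMP Zs H \<and> minimally_continuous Zs H"
    if ws: "\<And>n. 0 \<le> w n \<and> w n \<le> 1" and cw: "cont_wrt (lp_w_norm (ereal r) w) Zs H" for w
  proof (rule WMF[OF cw _ _ std])
    show "(\<lambda>T. lp_w_norm (ereal r) w (\<lambda>n. trunc T z n - z n)) \<longlonglongrightarrow> 0" if "z \<in> Zs" for z
      using that up by (intro TR_fin[OF r0 ws]) auto
    show "lp_w_norm (ereal r) w (\<lambda>n. delta t u n - delta t v n) \<le> norm (u - v)" for t u v
      by (rule DL_fin[OF r0 ws])
  qed
  have C_MF: "minimal_FMP Zs H \<and> minimally_continuous Zs H" if c: "p_continuous (ereal r) Zs H"
  proof -
    have "cont_wrt (lp_w_norm (ereal r) (\<lambda>_. 1)) Zs H"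
      using c by (simp add: p_continuous_def lp_norm_eq)
    then show ?thesis by (rule W_MF[rotated]) simp
  qed
  have k_C: "p_continuous (ereal r) Zs H" if cr: "conv_rep Zs H \<kappa>" and sk: "summable (\<lambda>n. onorm (\<kappa> n) powr q)" for \<kappa>
  proof -
    have "cont_wrt (lp_w_norm (ereal r) (\<lambda>_. 1)) Zs H"
      by (rule Cont_fin[OF cr up r q rq]) (use sk in simp_all)
    then show ?thesis using up by (simp add: p_continuous_def lp_norm_eq)
  qed
  have MF_W: "p_weighted_FMP (ereal r) Zs H" if mf: "minimal_FMP Zs H" "minimally_continuous Zs H"
  proof -
    have cr: "conv_rep Zs H \<kappa>0" unfolding \<kappa>0_def by (rule MF_cr'[OF mf])
    obtain w where ws: "weighting_seq w" and sw: "summable (\<lambda>n. onorm (\<kappa>0 n) powr q * w n powr (- (q / r)))"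
      using weight_summable[of "\<lambda>n. onorm (\<kappa>0 n) powr q" "q / r"] N2[OF mf] r q by auto
    have "cont_wrt (lp_w_norm (ereal r) w) Zs H"
      by (rule Cont_fin[OF cr up r q rq _ sw]) (use weighting_pos[OF ws] in auto)
    then show ?thesis using ws up by (auto simp: p_weighted_FMP_def)
  qed
  have MF_C: "p_continuous (ereal r) Zs H" if mf: "minimal_FMP Zs H" "minimally_continuous Zs H"
    using k_C[OF MF_cr'[OF mf] N2[OF mf, unfolded \<kappa>0_def]] .
  have W_MF': "minimal_FMP Zs H \<and> minimally_continuous Zs H" if W: "p_weighted_FMP (ereal r) Zs H"
  proof -
    obtain w where ws: "weighting_seq w" and cw: "cont_wrt (lp_w_norm (ereal r) w) Zs H"
      using W by (auto simp: p_weighted_FMP_def)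
    show ?thesis by (rule W_MF[OF _ cw]) (use weighting_bounds[OF ws] in auto)
  qed
  have i1: "p_weighted_FMP (ereal r) Zs H \<longleftrightarrow> p_continuous (ereal r) Zs H"
    using W_MF' MF_C C_MF MF_W by blast
  have i2: "p_continuous (ereal r) Zs H \<longleftrightarrow> (\<exists>\<kappa>. conv_rep Zs H \<kappa> \<and> summable (\<lambda>n. onorm (\<kappa> n) powr q))"
  proof
    assume c: "p_continuous (ereal r) Zs H"
    have mf: "minimal_FMP Zs H" "minimally_continuous Zs H" using C_MF[OF c] by auto
    show "\<exists>\<kappa>. conv_rep Zs H \<kappa> \<and> summable (\<lambda>n. onorm (\<kappa> n) powr q)"
      using MF_cr'[OF mf] N2[OF mf] unfolding \<kappa>0_def by blast
  qed (use k_C in blast)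
  have i3: "p_continuous (ereal r) Zs H \<longleftrightarrow> minimal_FMP Zs H \<and> minimally_continuous Zs H"
    using C_MF MF_C by blast
  show ?thesis using i1 i2 i3 by blast
qed

lemma part3:
  assumes low: "c0_seq \<inter> lp_ball \<infinity> \<subseteq> Zs" and up: "Zs \<subseteq> lp_space \<infinity>"
  shows "(p_weighted_FMP \<infinity> Zs H \<longleftrightarrow> (\<exists>\<kappa>. conv_rep Zs H \<kappa> \<and> summable (\<lambda>n. onorm (\<kappa> n))))
     \<and> (p_weighted_FMP \<infinity> Zs H \<longleftrightarrow> minimal_FMP Zs H \<and> minimally_continuous Zs H)
     \<and> (Zs \<subseteq> c0_seq \<longrightarrow> (p_weighted_FMP \<infinity> Zs H \<longleftrightarrow> p_continuous \<infinity> Zs H))"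
proof -
  define \<kappa>0 where "\<kappa>0 = (\<lambda>n u. L (delta n u))"
  have N3: "summable (\<lambda>n. onorm (\<kappa>0 n))"
    if mf: "minimal_FMP Zs H" "minimally_continuous Zs H"
  proof (rule ccontr)
    assume ns: "\<not> ?thesis"
    have cr: "conv_rep Zs H \<kappa>0" unfolding \<kappa>0_def by (rule MF_cr'[OF mf])
    have c0: "0 \<le> onorm (\<kappa>0 n)" for n by (rule onorm_pos_le[OF conv_rep_bl[OF cr]])
    obtain a where a01: "\<And>n. 0 \<le> a n \<and> a n \<le> 1" and al: "a \<longlonglongrightarrow> 0"
      and nsa: "\<not> summable (\<lambda>n. a n * onorm (\<kappa>0 n))"
      using S3[of "\<lambda>n. onorm (\<kappa>0 n)", OF c0 ns] by blast
    have a0: "0 \<le> a n" for n using a01[of n] by simp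
    have ab: "a \<in> lp_ball \<infinity>"
      by (rule lp_ball_inf_I) (use a01 in simp)
    have "summable (\<lambda>n. a n * onorm (\<kappa>0 n))"
      by (rule dual_sum[OF cr low _ a0 c0_of_tendsto[OF al] ab]) auto
    with nsa show False by simp
  qed
  have W_MF: "minimal_FMP Zs H \<and> minimally_continuous Zs H" if W: "p_weighted_FMP \<infinity> Zs H"
  proof -
    obtain w where ws: "weighting_seq w" and cw: "cont_wrt (lp_w_norm \<infinity> w) Zs H"
      using W by (auto simp: p_weighted_FMP_def)
    have wb: "\<And>n. 0 \<le> w n \<and> w n \<le> 1" by (rule weighting_bounds[OF ws])
    have dw: "decseq w" and wl: "w \<longlonglongrightarrow> 0" using ws by (auto simp: weighting_seq_def)
    show ?thesis
    proof (rule WMF[OF cw _ _ std])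
      show "(\<lambda>T. lp_w_norm \<infinity> w (\<lambda>n. trunc T z n - z n)) \<longlonglongrightarrow> 0" if "z \<in> Zs" for z
        using that up wb by (intro TR_inf_w[OF _ dw wl]) auto
      show "lp_w_norm \<infinity> w (\<lambda>n. delta t u n - delta t v n) \<le> norm (u - v)" for t u v
        by (rule DL_inf[OF wb])
    qed
  qed
  have k_W: "p_weighted_FMP \<infinity> Zs H" if cr: "conv_rep Zs H \<kappa>" and sk: "summable (\<lambda>n. onorm (\<kappa> n))" for \<kappa>
  proof -
    have c0: "0 \<le> onorm (\<kappa> n)" for n by (rule onorm_pos_le[OF conv_rep_bl[OF cr]])
    obtain w where ws: "weighting_seq w" and sw: "summable (\<lambda>n. onorm (\<kappa> n) * w n powr (- 1))"
      using weight_summable[of "\<lambda>n. onorm (\<kappa> n)" 1] c0 sk by auto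
    have wp: "0 < w n \<and> w n \<le> 1" for n by (rule weighting_pos[OF ws])
    have eqf: "(\<lambda>n. onorm (\<kappa> n) * w n powr (- 1)) = (\<lambda>n. onorm (\<kappa> n) / w n)"
    proof (rule ext)
      fix n show "onorm (\<kappa> n) * w n powr (- 1) = onorm (\<kappa> n) / w n"
        using wp[of n] by (simp add: powr_minus divide_inverse)
    qed
    have sw': "summable (\<lambda>n. onorm (\<kappa> n) / w n)" using sw unfolding eqf .
    have "cont_wrt (lp_w_norm \<infinity> w) Zs H" by (rule Cont_inf[OF cr up wp sw'])
    then show ?thesis using ws up by (auto simp: p_weighted_FMP_def)
  qed
  have k_C: "p_continuous \<infinity> Zs H" if cr: "conv_rep Zs H \<kappa>" and sk: "summable (\<lambda>n. onorm (\<kappa> n))" for \<kappa>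
  proof -
    have "cont_wrt (lp_w_norm \<infinity> (\<lambda>_. 1)) Zs H" by (rule Cont_inf[OF cr up]) (use sk in simp_all)
    then show ?thesis using up by (simp add: p_continuous_def lp_norm_eq)
  qed
  have C_MF: "minimal_FMP Zs H \<and> minimally_continuous Zs H" if c: "p_continuous \<infinity> Zs H" and zc: "Zs \<subseteq> c0_seq"
  proof -
    have cw: "cont_wrt (lp_w_norm \<infinity> (\<lambda>_. 1)) Zs H"
      using c by (simp add: p_continuous_def lp_norm_eq)
    show ?thesis
    proof (rule WMF[OF cw _ _ std])
      show "(\<lambda>T. lp_w_norm \<infinity> (\<lambda>_. 1) (\<lambda>n. trunc T z n - z n)) \<longlonglongrightarrow> 0" if "z \<in> Zs" for z
        using that zc by (intro TR_inf_c0) auto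
      show "lp_w_norm \<infinity> (\<lambda>_. 1) (\<lambda>n. delta t u n - delta t v n) \<le> norm (u - v)" for t u v
        by (rule DL_inf) simp
    qed
  qed
  have MF_k: "conv_rep Zs H \<kappa>0 \<and> summable (\<lambda>n. onorm (\<kappa>0 n))" if mf: "minimal_FMP Zs H \<and> minimally_continuous Zs H"
    using MF_cr'[of] mf N3 unfolding \<kappa>0_def by blast
  have i1: "p_weighted_FMP \<infinity> Zs H \<longleftrightarrow> (\<exists>\<kappa>. conv_rep Zs H \<kappa> \<and> summable (\<lambda>n. onorm (\<kappa> n)))"
    using W_MF MF_k k_W by blast
  have i2: "p_weighted_FMP \<infinity> Zs H \<longleftrightarrow> minimal_FMP Zs H \<and> minimally_continuous Zs H"
    using W_MF MF_k k_W by blast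
  have i3: "Zs \<subseteq> c0_seq \<longrightarrow> (p_weighted_FMP \<infinity> Zs H \<longleftrightarrow> p_continuous \<infinity> Zs H)"
    using W_MF MF_k k_W k_C C_MF by blast
  show ?thesis using i1 i2 i3 by blast
qed

end


theorem theorem3p10:
  fixes Zs :: "(nat \<Rightarrow> 'z::real_normed_vector) set"
    and H :: "(nat \<Rightarrow> 'z) \<Rightarrow> 'y::real_normed_vector"
    and p :: ereal
  assumes std: "std_assm Zs"
    and findim: "\<exists>B::'y set. finite B \<and> span B = UNIV"
    and p1: "1 \<le> p"
    and lower: "c0_seq \<inter> lp_ball p \<subseteq> Zs"
    and upper: "Zs \<subseteq> lp_space p"
    and lin: "linear_functional Zs H"
  shows
   "(p = 1 \<longrightarrow>
       (p_weighted_FMP p Zs H \<longleftrightarrow> (\<exists>\<kappa>. conv_rep Zs H \<kappa> \<and> (\<lambda>n. onorm (\<kappa> n)) \<longlonglongrightarrow> 0))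
     \<and> (p_continuous p Zs H \<longleftrightarrow> (\<exists>\<kappa>. conv_rep Zs H \<kappa> \<and> bdd_above (range (\<lambda>n. onorm (\<kappa> n)))))
     \<and> (p_continuous p Zs H \<longleftrightarrow> minimal_FMP Zs H \<and> minimally_continuous Zs H))
  \<and> (1 < p \<and> p < \<infinity> \<longrightarrow>
       (\<forall>q::real. 1 < q \<and> 1 / real_of_ereal p + 1 / q = 1 \<longrightarrow>
          (p_weighted_FMP p Zs H \<longleftrightarrow> p_continuous p Zs H)
        \<and> (p_continuous p Zs H \<longleftrightarrow> (\<exists>\<kappa>. conv_rep Zs H \<kappa> \<and> summable (\<lambda>n. onorm (\<kappa> n) powr q)))
        \<and> (p_continuous p Zs H \<longleftrightarrow> minimal_FMP Zs H \<and> minimally_continuous Zs H)))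
  \<and> (p = \<infinity> \<longrightarrow>
       (p_weighted_FMP p Zs H \<longleftrightarrow> (\<exists>\<kappa>. conv_rep Zs H \<kappa> \<and> summable (\<lambda>n. onorm (\<kappa> n))))
     \<and> (p_weighted_FMP p Zs H \<longleftrightarrow> minimal_FMP Zs H \<and> minimally_continuous Zs H)
     \<and> (Zs \<subseteq> c0_seq \<longrightarrow> (p_weighted_FMP p Zs H \<longleftrightarrow> p_continuous p Zs H)))"
proof -
  obtain L where L: "lin_L L" and HL: "\<And>z. z \<in> Zs \<Longrightarrow> H z = L z"
    using lin_obtain[OF lin] by blast
  have c1: "p = 1 \<longrightarrow>
       (p_weighted_FMP p Zs H \<longleftrightarrow> (\<exists>\<kappa>. conv_rep Zs H \<kappa> \<and> (\<lambda>n. onorm (\<kappa> n)) \<longlonglongrightarrow> 0))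
     \<and> (p_continuous p Zs H \<longleftrightarrow> (\<exists>\<kappa>. conv_rep Zs H \<kappa> \<and> bdd_above (range (\<lambda>n. onorm (\<kappa> n)))))
     \<and> (p_continuous p Zs H \<longleftrightarrow> minimal_FMP Zs H \<and> minimally_continuous Zs H)"
  proof
    assume "p = 1"
    then have pe: "p = ereal 1" by (simp add: one_ereal_def)
    show "(p_weighted_FMP p Zs H \<longleftrightarrow> (\<exists>\<kappa>. conv_rep Zs H \<kappa> \<and> (\<lambda>n. onorm (\<kappa> n)) \<longlonglongrightarrow> 0))
     \<and> (p_continuous p Zs H \<longleftrightarrow> (\<exists>\<kappa>. conv_rep Zs H \<kappa> \<and> bdd_above (range (\<lambda>n. onorm (\<kappa> n)))))
     \<and> (p_continuous p Zs H \<longleftrightarrow> minimal_FMP Zs H \<and> minimally_continuous Zs H)"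
      unfolding pe by (rule part1[OF std findim L HL lower[unfolded pe] upper[unfolded pe]])
  qed
  have c2: "1 < p \<and> p < \<infinity> \<longrightarrow>
       (\<forall>q::real. 1 < q \<and> 1 / real_of_ereal p + 1 / q = 1 \<longrightarrow>
          (p_weighted_FMP p Zs H \<longleftrightarrow> p_continuous p Zs H)
        \<and> (p_continuous p Zs H \<longleftrightarrow> (\<exists>\<kappa>. conv_rep Zs H \<kappa> \<and> summable (\<lambda>n. onorm (\<kappa> n) powr q)))
        \<and> (p_continuous p Zs H \<longleftrightarrow> minimal_FMP Zs H \<and> minimally_continuous Zs H))"
  proof (intro impI allI)
    fix q :: real
    assume pb: "1 < p \<and> p < \<infinity>" and qb: "1 < q \<and> 1 / real_of_ereal p + 1 / q = 1"
    obtain r where pe: "p = ereal r" using pb by (cases p) auto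
    have r: "r > 1" using pb pe by simp
    have rq: "1 / r + 1 / q = 1" using qb pe by simp
    have q1: "q > 1" using qb by simp
    show "(p_weighted_FMP p Zs H \<longleftrightarrow> p_continuous p Zs H)
        \<and> (p_continuous p Zs H \<longleftrightarrow> (\<exists>\<kappa>. conv_rep Zs H \<kappa> \<and> summable (\<lambda>n. onorm (\<kappa> n) powr q)))
        \<and> (p_continuous p Zs H \<longleftrightarrow> minimal_FMP Zs H \<and> minimally_continuous Zs H)"
      unfolding pe by (rule part2[OF std findim L HL r q1 rq lower[unfolded pe] upper[unfolded pe]])
  qed
  have c3: "p = \<infinity> \<longrightarrow>
       (p_weighted_FMP p Zs H \<longleftrightarrow> (\<exists>\<kappa>. conv_rep Zs H \<kappa> \<and> summable (\<lambda>n. onorm (\<kappa> n))))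
     \<and> (p_weighted_FMP p Zs H \<longleftrightarrow> minimal_FMP Zs H \<and> minimally_continuous Zs H)
     \<and> (Zs \<subseteq> c0_seq \<longrightarrow> (p_weighted_FMP p Zs H \<longleftrightarrow> p_continuous p Zs H))"
  proof
    assume pe: "p = \<infinity>"
    show "(p_weighted_FMP p Zs H \<longleftrightarrow> (\<exists>\<kappa>. conv_rep Zs H \<kappa> \<and> summable (\<lambda>n. onorm (\<kappa> n))))
     \<and> (p_weighted_FMP p Zs H \<longleftrightarrow> minimal_FMP Zs H \<and> minimally_continuous Zs H)
     \<and> (Zs \<subseteq> c0_seq \<longrightarrow> (p_weighted_FMP p Zs H \<longleftrightarrow> p_continuous p Zs H))"
      unfolding pe by (rule part3[OF std findim L HL lower[unfolded pe] upper[unfolded pe]])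
  qed
  show ?thesis using c1 c2 c3 by (intro conjI)
qed

end
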